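(* The leading eigenvalue $k$ of $\widehat\mu$ is twice differentiable at $0$, with gradient $\nabla k(0)=\mathbf{i}\,m$ and Hessian matrix $\mathbf{H}_k(0)=-\sigma$.
   Context: Fix integers $d,p\ge 1$. Let $(Z_n)=(A_n,M_n)$ be a Markov-additive process on $\mathbb{Z}^d\times\{1,\dots,p\}$ (a Markov chain with $\mathbb{P}_{(x,i)}((A_1,M_1)=(x',i'))=\mathbb{P}_{(0,i)}((A_1,M_1)=(x'-x,i'))$), with jump matrix $\mu_{i,j}(x)=\mathbb{P}_{(0,i)}((A_1,M_1)=(x,j))$, assumed irreducible, aperiodic (for every state, the gcd of possible return times is $1$), with finite exponential moments ($\sum_xe^{\alpha\|x\|}\mu_{i,j}(x)<\infty$ for all $\alpha>0$). Fourier transform $\widehat\mu(\theta)_{i,j}=\sum_xe^{\mathbf{i}x\cdot\theta}\mu_{i,j}(x)$, $\theta\in\mathbb{R}^d$. For $\theta$ in a neighborhood of $0$, $\widehat\mu(\theta)$ has a unique eigenvalue of maximal modulus, which is simple; it is denoted $k(\theta)$ (with $k(0)=1$). $\pi$ is the stationary distribution of $\widehat\mu(0)$ (the transition matrix of $(M_n)$); local drifts $m_{i,j}=\sum_xx\mu_{i,j}(x)$, global drift $m=\sum_{i,j}\pi_im_{i,j}$. A change of section is a real $p\times d$ matrix $g$ with rows $g_i$; ${}^g\mu_{i,j}(x)=\mu_{i,j}(x+g_j-g_i)$ for $x\in\mathbb{R}^d$, ${}^gm_{i,j}=\sum_xx\,{}^g\mu_{i,j}(x)$; $g$ is appropriate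 if $\sum_j{}^gm_{i,j}=m$ for all $i$ (such $g$ exist and give the same ${}^g\mu$). The energy matrix is $\sigma_{k,l}=\sum_{x\in\mathbb{R}^d}x_kx_l\sum_{i,j}\pi_i\,{}^g\mu_{i,j}(x)$ for $g$ appropriate. *)

theory Defs
  imports "HOL-Analysis.Analysis"
begin

text \<open>States of the modulating chain: a finite type 's (the set {1..p}).
  Positions: int ^ 'd (the lattice Z^d); ambient space real ^ 'd.
  Jump matrix: mu i j x = P_(0,i)((A_1,M_1) = (x,j)).\<close>

definition intvec :: "int ^ 'd \<Rightarrow> real ^ 'd" where
  "intvec z = (\<chi> k. of_int (z $ k))"

text \<open>n-step transition probabilities of the Markov-additive process Z,
  started at (0,i): Pn mu n i j x = P_(0,i)((A_n,M_n) = (x,j)).\<close>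
fun Pn :: "('s::finite \<Rightarrow> 's \<Rightarrow> int ^ 'd \<Rightarrow> real) \<Rightarrow> nat \<Rightarrow> 's \<Rightarrow> 's \<Rightarrow> int ^ 'd \<Rightarrow> real" where
  "Pn mu 0 i j x = (if i = j \<and> x = 0 then 1 else 0)"
| "Pn mu (Suc n) i j x = (\<Sum>l\<in>UNIV. infsum (\<lambda>y. Pn mu n i l y * mu l j (x - y)) UNIV)"

definition MA_kernel :: "('s::finite \<Rightarrow> 's \<Rightarrow> int ^ 'd \<Rightarrow> real) \<Rightarrow> bool" where
  "MA_kernel mu \<longleftrightarrow> (\<forall>i j x. 0 \<le> mu i j x) \<and>
     (\<forall>i j. mu i j summable_on UNIV) \<and>
     (\<forall>i. (\<Sum>j\<in>UNIV. infsum (mu i j) UNIV) = 1)"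

text \<open>Irreducibility of Z: every state (y,j) is reachable from every state (x,i);
  by translation invariance this means P_(0,i)(Z_n = (y - x, j)) > 0 for some n.\<close>
definition MA_irreducible :: "('s::finite \<Rightarrow> 's \<Rightarrow> int ^ 'd \<Rightarrow> real) \<Rightarrow> bool" where
  "MA_irreducible mu \<longleftrightarrow> (\<forall>i j x. \<exists>n. Pn mu n i j x > 0)"

text \<open>Aperiodicity: for every state (x,i) the gcd of possible return times is 1
  (by translation invariance, independent of x).\<close>
definition MA_aperiodic :: "('s::finite \<Rightarrow> 's \<Rightarrow> int ^ 'd \<Rightarrow> real) \<Rightarrow> bool" where
  "MA_aperiodic mu \<longleftrightarrow> (\<forall>i. Gcd {n. 0 < n \<and> Pn mu n i i 0 > 0} = (1::nat))"

definition exp_moments :: "('s::finite \<Rightarrow> 's \<Rightarrow> int ^ 'd \<Rightarrow> real) \<Rightarrow> bool" where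
  "exp_moments mu \<longleftrightarrow> (\<forall>\<alpha>>0. \<forall>i j. (\<lambda>x. exp (\<alpha> * norm (intvec x)) * mu i j x) summable_on UNIV)"

definition muhat :: "('s::finite \<Rightarrow> 's \<Rightarrow> int ^ 'd \<Rightarrow> real) \<Rightarrow> real ^ 'd \<Rightarrow> complex ^ 's ^ 's" where
  "muhat mu th = (\<chi> i j. infsum (\<lambda>x. cis (intvec x \<bullet> th) * complex_of_real (mu i j x)) UNIV)"

definition is_eigenvalue :: "complex ^ 's ^ 's \<Rightarrow> complex \<Rightarrow> bool" where
  "is_eigenvalue A l \<longleftrightarrow> (\<exists>v. v \<noteq> 0 \<and> A *v v = l *s v)"

definition leading_eigenvalue :: "complex ^ 's ^ 's \<Rightarrow> complex \<Rightarrow> bool" where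
  "leading_eigenvalue A l \<longleftrightarrow> is_eigenvalue A l \<and>
     (\<forall>l'. is_eigenvalue A l' \<and> l' \<noteq> l \<longrightarrow> cmod l' < cmod l)"

definition Mtrans :: "('s::finite \<Rightarrow> 's \<Rightarrow> int ^ 'd \<Rightarrow> real) \<Rightarrow> 's \<Rightarrow> 's \<Rightarrow> real" where
  "Mtrans mu i j = infsum (mu i j) UNIV"

definition stationary :: "('s::finite \<Rightarrow> 's \<Rightarrow> int ^ 'd \<Rightarrow> real) \<Rightarrow> ('s \<Rightarrow> real) \<Rightarrow> bool" where
  "stationary mu pr \<longleftrightarrow> (\<forall>i. 0 \<le> pr i) \<and> (\<Sum>i\<in>UNIV. pr i) = 1 \<and>
     (\<forall>j. (\<Sum>i\<in>UNIV. pr i * Mtrans mu i j) = pr j)"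

definition local_drift :: "('s::finite \<Rightarrow> 's \<Rightarrow> int ^ 'd \<Rightarrow> real) \<Rightarrow> 's \<Rightarrow> 's \<Rightarrow> real ^ 'd" where
  "local_drift mu i j = infsum (\<lambda>x. mu i j x *\<^sub>R intvec x) UNIV"

definition global_drift :: "('s::finite \<Rightarrow> 's \<Rightarrow> int ^ 'd \<Rightarrow> real) \<Rightarrow> ('s \<Rightarrow> real) \<Rightarrow> real ^ 'd" where
  "global_drift mu pr = (\<Sum>i\<in>UNIV. \<Sum>j\<in>UNIV. pr i *\<^sub>R local_drift mu i j)"

definition sec_mu :: "('s::finite \<Rightarrow> 's \<Rightarrow> int ^ 'd \<Rightarrow> real) \<Rightarrow> ('s \<Rightarrow> real ^ 'd) \<Rightarrow> 's \<Rightarrow> 's \<Rightarrow> real ^ 'd \<Rightarrow> real" where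
  "sec_mu mu g i j x = (if \<exists>z. intvec z = x + g j - g i
       then mu i j (THE z. intvec z = x + g j - g i) else 0)"

definition sec_drift :: "('s::finite \<Rightarrow> 's \<Rightarrow> int ^ 'd \<Rightarrow> real) \<Rightarrow> ('s \<Rightarrow> real ^ 'd) \<Rightarrow> 's \<Rightarrow> 's \<Rightarrow> real ^ 'd" where
  "sec_drift mu g i j = infsum (\<lambda>x. sec_mu mu g i j x *\<^sub>R x) UNIV"

definition appropriate :: "('s::finite \<Rightarrow> 's \<Rightarrow> int ^ 'd \<Rightarrow> real) \<Rightarrow> ('s \<Rightarrow> real) \<Rightarrow> ('s \<Rightarrow> real ^ 'd) \<Rightarrow> bool" where
  "appropriate mu pr g \<longleftrightarrow> (\<forall>i. (\<Sum>j\<in>UNIV. sec_drift mu g i j) = global_drift mu pr)"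

definition energy :: "('s::finite \<Rightarrow> 's \<Rightarrow> int ^ 'd \<Rightarrow> real) \<Rightarrow> ('s \<Rightarrow> real) \<Rightarrow> ('s \<Rightarrow> real ^ 'd) \<Rightarrow> 'd \<Rightarrow> 'd \<Rightarrow> real" where
  "energy mu pr g k l = infsum (\<lambda>x::real ^ 'd. x $ k * x $ l *
       (\<Sum>i\<in>UNIV. \<Sum>j\<in>UNIV. pr i * sec_mu mu g i j x)) UNIV"

end

theory Submission
  imports Defs "HOL-Probability.Characteristic_Functions"
begin

definition FT :: "(int ^ 'd \<Rightarrow> complex) \<Rightarrow> real ^ 'd \<Rightarrow> complex" where
  "FT c th = infsum (\<lambda>x. cis (intvec x \<bullet> th) * c x) UNIV"

definition mom :: "nat \<Rightarrow> (int ^ 'd \<Rightarrow> complex) \<Rightarrow> bool" where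
  "mom n c \<longleftrightarrow> (\<lambda>x. norm (intvec x) ^ n * norm (c x)) summable_on UNIV"

lemma has_sum_sum_fin:
  fixes f :: "'i \<Rightarrow> 'a \<Rightarrow> 'b::topological_comm_monoid_add"
  assumes "finite I" "\<And>i. i \<in> I \<Longrightarrow> (f i has_sum s i) A"
  shows "((\<lambda>x. \<Sum>i\<in>I. f i x) has_sum (\<Sum>i\<in>I. s i)) A"
  using assms
proof (induction I rule: finite_induct)
  case (insert a F)
  have "(f a has_sum s a) A" using insert.prems by simp
  moreover have "((\<lambda>x. \<Sum>i\<in>F. f i x) has_sum sum s F) A" using insert by simp
  ultimately have "((\<lambda>x. f a x + (\<Sum>i\<in>F. f i x)) has_sum (s a + sum s F)) A" by (rule has_sum_add)
  thus ?case using insert.hyps by simp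
qed simp

lemma has_sum_diff:
  fixes f g :: "'a \<Rightarrow> 'b::topological_ab_group_add"
  assumes "(f has_sum a) A" "(g has_sum b) A"
  shows "((\<lambda>x. f x - g x) has_sum (a - b)) A"
proof -
  have "((\<lambda>x. - g x) has_sum - b) A" using assms(2) by (simp add: has_sum_uminus)
  from has_sum_add[OF assms(1) this] show ?thesis by simp
qed

lemma summable_dom:
  fixes f :: "'a \<Rightarrow> 'b::banach"
  assumes "g summable_on A" "\<And>x. x\<in>A \<Longrightarrow> norm (f x) \<le> g x"
  shows "f summable_on A"
  apply (rule abs_summable_summable)
  apply (rule summable_on_comparison_test[OF assms(1)])
  using assms(2) by auto

lemma intvec_nth [simp]: "intvec z $ l = of_int (z $ l)"
  by (simp add: intvec_def)

lemma abs_intvec_nth: "\<bar>of_int (z $ l)\<bar> \<le> norm (intvec z)"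
  using component_le_norm_cart[of "intvec z" l] by simp

lemma mom_mono:
  fixes c :: "int ^ 'd \<Rightarrow> complex"
  assumes "mom 0 c" "mom n c" "m \<le> n"
  shows "mom m c"
proof -
  have "(\<lambda>x. norm (intvec x) ^ 0 * norm (c x) + norm (intvec x) ^ n * norm (c x)) summable_on UNIV"
    using assms unfolding mom_def by (intro summable_on_add)
  then show ?thesis unfolding mom_def
  proof (rule summable_on_comparison_test)
    fix x :: "int ^ 'd"
    have "norm (intvec x) ^ m \<le> 1 + norm (intvec x) ^ n"
    proof (cases "norm (intvec x) \<le> 1")
      case True
      then have "norm (intvec x) ^ m \<le> 1" by (simp add: power_le_one)
      then show ?thesis by (smt (verit) zero_le_power norm_ge_zero)
    next
      case False
      then have "norm (intvec x) ^ m \<le> norm (intvec x) ^ n"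
        by (intro power_increasing assms(3)) auto
      then show ?thesis by simp
    qed
    then have "norm (intvec x) ^ m * norm (c x) \<le> (1 + norm (intvec x) ^ n) * norm (c x)"
      by (intro mult_right_mono) auto
    then show "norm (intvec x) ^ m * norm (c x) \<le> norm (intvec x) ^ 0 * norm (c x) + norm (intvec x) ^ n * norm (c x)"
      by (simp add: algebra_simps)
  qed auto
qed

lemma FT_has_sum:
  assumes "mom 0 c"
  shows "((\<lambda>x. cis (intvec x \<bullet> th) * c x) has_sum FT c th) UNIV"
proof -
  have "(\<lambda>x. cis (intvec x \<bullet> th) * c x) summable_on UNIV"
    by (rule summable_dom[of "\<lambda>x. norm (c x)"]) (use assms in \<open>auto simp: mom_def norm_mult\<close>)
  then show ?thesis unfolding FT_def by simp
qed

definition cI :: "'d \<Rightarrow> (int ^ 'd \<Rightarrow> complex) \<Rightarrow> int ^ 'd \<Rightarrow> complex" where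
  "cI l c x = \<i> * of_real (intvec x $ l) * c x"

lemma mom_cI:
  assumes "mom (Suc n) c"
  shows "mom n (cI l c)"
  unfolding mom_def
proof (rule summable_on_comparison_test)
  show "(\<lambda>x. norm (intvec x) ^ Suc n * norm (c x)) summable_on UNIV" using assms by (simp add: mom_def)
  fix x
  have "norm (cI l c x) \<le> norm (intvec x) * norm (c x)"
    using abs_intvec_nth[of x l] by (simp add: cI_def norm_mult mult_right_mono)
  then have "norm (intvec x) ^ n * norm (cI l c x) \<le> norm (intvec x) ^ n * (norm (intvec x) * norm (c x))"
    by (intro mult_left_mono) auto
  then show "norm (intvec x) ^ n * norm (cI l c x) \<le> norm (intvec x) ^ Suc n * norm (c x)"
    by (simp add: algebra_simps)
qed auto

lemma cis_taylor1: "cmod (cis t - 1 - \<i> * of_real t) \<le> t^2 / 2"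
proof -
  have "cmod (iexp t - (\<Sum>k\<le>1. (\<i> * complex_of_real t)^k / fact k)) \<le> \<bar>t\<bar>^(Suc 1) / fact (Suc 1)"
    by (rule iexp_approx1)
  then show ?thesis by (simp add: cis_conv_exp power2_eq_square diff_diff_eq)
qed

lemma FT_has_derivative:
  fixes c :: "int ^ 'd \<Rightarrow> complex" and th :: "real ^ 'd"
  assumes m0: "mom 0 c" and m1: "mom 1 c" and m2: "mom 2 c"
  shows "(FT c has_derivative (\<lambda>h. \<Sum>l\<in>UNIV. of_real (h$l) * FT (cI l c) th)) (at th)"
proof -
  define D where "D h = (\<Sum>l\<in>UNIV. of_real (h$l) * FT (cI l c) th)" for h :: "real ^ 'd"
  define M2 where "M2 = infsum (\<lambda>x. norm (intvec x) ^ 2 * norm (c x)) UNIV"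
  have M2: "((\<lambda>x. norm (intvec x) ^ 2 * norm (c x)) has_sum M2) UNIV"
    using m2 by (simp add: mom_def M2_def)
  have M2nn: "M2 \<ge> 0" unfolding M2_def by (intro infsum_nonneg) auto
  have bl: "bounded_linear D"
    unfolding D_def
    by (intro bounded_linear_sum bounded_linear_mult_left[THEN bounded_linear_compose]
        bounded_linear_of_real[THEN bounded_linear_compose] bounded_linear_vec_nth)
  have mcI: "mom 0 (cI l c)" for l using mom_cI[of 0 c l] m1 by simp
  have key: "norm (FT c y - FT c th - D (y - th)) \<le> norm (y - th)^2 / 2 * M2" for y
  proof -
    define h where "h = y - th"
    have s1: "((\<lambda>x. cis (intvec x \<bullet> y) * c x) has_sum FT c y) UNIV" by (rule FT_has_sum[OF m0])
    have s0: "((\<lambda>x. cis (intvec x \<bullet> th) * c x) has_sum FT c th) UNIV" by (rule FT_has_sum[OF m0])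
    have s2: "((\<lambda>x. \<Sum>l\<in>UNIV. of_real (h$l) * (cis (intvec x \<bullet> th) * cI l c x)) has_sum D h) UNIV"
      unfolding D_def by (intro has_sum_sum_fin has_sum_cmult_right FT_has_sum mcI) auto
    have s: "((\<lambda>x. cis (intvec x \<bullet> y) * c x - cis (intvec x \<bullet> th) * c x
        - (\<Sum>l\<in>UNIV. of_real (h$l) * (cis (intvec x \<bullet> th) * cI l c x))) has_sum (FT c y - FT c th - D h)) UNIV"
      by (intro has_sum_diff s0 s1 s2)
    have eq: "cis (intvec x \<bullet> y) * c x - cis (intvec x \<bullet> th) * c x
        - (\<Sum>l\<in>UNIV. of_real (h$l) * (cis (intvec x \<bullet> th) * cI l c x))
        = cis (intvec x \<bullet> th) * (cis (intvec x \<bullet> h) - 1 - \<i> * of_real (intvec x \<bullet> h)) * c x" for x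
    proof -
      have "cis (intvec x \<bullet> y) = cis (intvec x \<bullet> th) * cis (intvec x \<bullet> h)"
        by (simp add: h_def cis_mult inner_diff_right)
      moreover have "(\<Sum>l\<in>UNIV. of_real (h$l) * (cis (intvec x \<bullet> th) * cI l c x))
          = cis (intvec x \<bullet> th) * \<i> * of_real (intvec x \<bullet> h) * c x"
        by (simp add: cI_def inner_vec_def sum_distrib_left sum_distrib_right algebra_simps)
      ultimately show ?thesis by (simp add: algebra_simps)
    qed
    have bnd: "norm (cis (intvec x \<bullet> th) * (cis (intvec x \<bullet> h) - 1 - \<i> * of_real (intvec x \<bullet> h)) * c x)
        \<le> norm h ^ 2 / 2 * (norm (intvec x) ^ 2 * norm (c x))" for x
    proof -
      have "\<bar>intvec x \<bullet> h\<bar> \<le> norm (intvec x) * norm h" by (rule Cauchy_Schwarz_ineq2)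
      then have "(intvec x \<bullet> h)^2 \<le> (norm (intvec x) * norm h)^2"
        by (metis abs_ge_zero power2_abs power_mono)
      then have "cmod (cis (intvec x \<bullet> h) - 1 - \<i> * of_real (intvec x \<bullet> h)) \<le> (norm (intvec x) * norm h)^2 / 2"
        using cis_taylor1[of "intvec x \<bullet> h"] by linarith
      then have le: "cmod (cis (intvec x \<bullet> h) - 1 - \<i> * of_real (intvec x \<bullet> h)) * norm (c x)
         \<le> (norm (intvec x) * norm h)^2 / 2 * norm (c x)" by (intro mult_right_mono) auto
      have "norm (cis (intvec x \<bullet> th) * (cis (intvec x \<bullet> h) - 1 - \<i> * of_real (intvec x \<bullet> h)) * c x)
          = cmod (cis (intvec x \<bullet> h) - 1 - \<i> * of_real (intvec x \<bullet> h)) * norm (c x)"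
        by (simp only: norm_mult norm_cis mult_1)
      also have "\<dots> \<le> (norm (intvec x) * norm h)^2 / 2 * norm (c x)" by (rule le)
      also have "\<dots> = norm h ^ 2 / 2 * (norm (intvec x) ^ 2 * norm (c x))"
        by (simp add: power_mult_distrib)
      finally show ?thesis .
    qed
    have "norm (FT c y - FT c th - D h) \<le> norm h ^ 2 / 2 * M2"
      apply (rule norm_infsum_le[OF s _ ])
       apply (rule has_sum_cmult_right[OF M2])
      using bnd eq by simp
    then show ?thesis by (simp add: h_def)
  qed
  show ?thesis
    unfolding D_def[symmetric] has_derivative_at_alt
  proof (intro conjI bl allI impI)
    fix e :: real assume e: "e > 0"
    show "\<exists>d>0. \<forall>y. norm (y - th) < d \<longrightarrow> norm (FT c y - FT c th - D (y - th)) \<le> e * norm (y - th)"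
    proof (intro exI[of _ "2 * e / (M2 + 1)"] conjI allI impI)
      show "0 < 2 * e / (M2 + 1)" using e M2nn by simp
      fix y assume "norm (y - th) < 2 * e / (M2 + 1)"
      then have "norm (y - th) * (M2 + 1) < 2 * e" using M2nn by (simp add: pos_less_divide_eq)
      moreover have "norm (y - th) * (M2 + 1) = norm (y - th) * M2 + norm (y - th)" by (simp add: algebra_simps)
      ultimately have "norm (y - th) * M2 \<le> 2 * e" using norm_ge_zero[of "y - th"] by linarith
      then have "norm (y - th) * (norm (y - th) * M2) / 2 \<le> norm (y - th) * (2 * e) / 2"
        by (intro divide_right_mono mult_left_mono) auto
      then have "norm (y - th)^2 / 2 * M2 \<le> e * norm (y - th)"
        by (simp add: power2_eq_square algebra_simps)
      with key[of y] show "norm (FT c y - FT c th - D (y - th)) \<le> e * norm (y - th)" by linarith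
    qed
  qed
qed

lemma crs: "r *\<^sub>R (z::complex) = of_real r * z" by (simp add: scaleR_conv_of_real)

lemma bb_mv: "bounded_bilinear (\<lambda>(A::complex^'s^'t) (v::complex^'s). A *v v)"
proof -
  have "bilinear (\<lambda>(A::complex^'s^'t) (v::complex^'s). A *v v)"
    unfolding bilinear_def
  proof (intro conjI allI)
    fix A :: "complex^'s^'t" show "linear ((*v) A)"
      using matrix_vector_mul_bounded_linear[of A] bounded_linear.linear by blast
  next
    fix v :: "complex^'s" show "linear (\<lambda>A::complex^'s^'t. A *v v)"
      by (intro linearI) (auto simp: matrix_vector_mult_def vec_eq_iff sum.distrib sum_distrib_left algebra_simps vector_scaleR_component crs)
  qed
  then show ?thesis by (simp add: bilinear_conv_bounded_bilinear)
qed

lemma bb_sv: "bounded_bilinear (\<lambda>(c::complex) (v::complex^'s). c *s v)"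
proof -
  have "bilinear (\<lambda>(c::complex) (v::complex^'s). c *s v)"
    unfolding bilinear_def
    by (auto intro!: linearI simp: vec_eq_iff algebra_simps vector_scaleR_component crs)
  then show ?thesis by (simp add: bilinear_conv_bounded_bilinear)
qed

definition pdot :: "complex^'s \<Rightarrow> complex^'s \<Rightarrow> complex" where
  "pdot p v = (\<Sum>i\<in>UNIV. p$i * v$i)"

lemma bl_pdot: "bounded_linear (pdot p)"
  unfolding pdot_def
  by (intro bounded_linear_sum bounded_linear_mult_right[THEN bounded_linear_compose] bounded_linear_vec_nth)

lemma pdot_simps: "pdot p (v + w) = pdot p v + pdot p w" "pdot p (v - w) = pdot p v - pdot p w"
  "pdot p (c *s v) = c * pdot p v" "pdot p 0 = 0" "pdot p (- v) = - pdot p v"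
  by (auto simp: pdot_def sum.distrib sum_subtractf sum_distrib_left algebra_simps sum_negf)

lemma Phi_deriv:
  fixes A :: "real^'d \<Rightarrow> complex^'s^'s" and DA :: "real^'d \<Rightarrow> real^'d \<Rightarrow> complex^'s^'s"
  assumes dA: "\<And>th. (A has_derivative DA th) (at th)"
  shows "((\<lambda>(th, l, v). (th, pdot p v - 1, A th *v v - l *s v)) has_derivative
     (\<lambda>(h, m, w). (h, pdot p w, A (fst x) *v w + DA (fst x) h *v snd (snd x) - (fst (snd x) *s w + m *s snd (snd x))))) (at x)"
proof -
  have e1: "(\<lambda>(th, l, v). (th, pdot p v - 1, A th *v v - l *s v)) =
      (\<lambda>y. (fst y, pdot p (snd (snd y)) - 1, A (fst y) *v snd (snd y) - fst (snd y) *s snd (snd y)))"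
    by auto
  have e2: "(\<lambda>(h, m, w). (h, pdot p w, A (fst x) *v w + DA (fst x) h *v snd (snd x) - (fst (snd x) *s w + m *s snd (snd x)))) =
     (\<lambda>y. (fst y, pdot p (snd (snd y)) - 0, A (fst x) *v snd (snd y) + DA (fst x) (fst y) *v snd (snd x) - (fst (snd x) *s snd (snd y) + fst (snd y) *s snd (snd x))))"
    by auto
  have dAf: "((\<lambda>y. A (fst y)) has_derivative (\<lambda>y. DA (fst x) (fst y))) (at x)"
    by (rule has_derivative_compose[OF has_derivative_fst[OF has_derivative_ident] dA])
  show ?thesis
    unfolding e1 e2
    by (intro has_derivative_Pair has_derivative_diff has_derivative_add
        bounded_bilinear.FDERIV[OF bb_mv] bounded_bilinear.FDERIV[OF bb_sv] dAf
        bounded_linear.has_derivative[OF bl_pdot] has_derivative_fst has_derivative_snd has_derivative_ident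
        has_derivative_const)
qed

lemma inv_cont:
  fixes Lb :: "'a::metric_space \<Rightarrow> 'b::euclidean_space \<Rightarrow>\<^sub>L 'b"
  assumes cont: "isCont Lb y0" and bij: "eventually (\<lambda>y. bij (blinfun_apply (Lb y))) (nhds y0)"
  shows "isCont (\<lambda>y. inv (blinfun_apply (Lb y)) z) y0"
proof -
  define L0 where "L0 = Lb y0"
  have bij0: "bij (blinfun_apply L0)" using eventually_nhds_x_imp_x[OF bij] by (simp add: L0_def)
  obtain B where B: "B > 0" "\<And>x. B * norm x \<le> norm (blinfun_apply L0 x)"
    using linear_inj_bounded_below_pos[of "blinfun_apply L0"] bij0 bij_is_inj bounded_linear.linear[OF blinfun.bounded_linear_right] by blast
  define x where "x y = inv (blinfun_apply (Lb y)) z" for y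
  have Lx: "blinfun_apply (Lb y) (x y) = z" if "bij (blinfun_apply (Lb y))" for y
    using that unfolding x_def by (meson bij_inv_eq_iff)
  have x0: "blinfun_apply L0 (x y0) = z" using Lx[of y0] bij0 by (simp add: L0_def)
  have tL: "(Lb \<longlongrightarrow> L0) (at y0)" using cont by (simp add: isCont_def L0_def)
  have ev1: "eventually (\<lambda>y. norm (Lb y - L0) < B / 2) (at y0)"
    using tendstoD[OF tL, of "B/2"] B(1) by (simp add: dist_norm)
  have ev2: "eventually (\<lambda>y. bij (blinfun_apply (Lb y))) (at y0)"
    using bij by (simp add: eventually_at_filter eventually_mono)
  have "eventually (\<lambda>y. norm (x y - x y0) \<le> (2 * norm z / B^2) * norm (Lb y - L0)) (at y0)"
    using ev1 ev2
  proof eventually_elim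
    case (elim y)
    have Ly: "blinfun_apply (Lb y) (x y) = z" using Lx elim(2) by blast
    have d: "blinfun_apply L0 (x y) - z = blinfun_apply (L0 - Lb y) (x y)"
      using Ly by (simp add: blinfun.diff_left)
    have n1: "norm (blinfun_apply (L0 - Lb y) (x y)) \<le> norm (Lb y - L0) * norm (x y)"
      using norm_blinfun[of "L0 - Lb y" "x y"] by (simp add: norm_minus_commute)
    have "B * norm (x y) \<le> norm (blinfun_apply L0 (x y))" by (rule B(2))
    also have "\<dots> \<le> norm z + norm (blinfun_apply L0 (x y) - z)" by (metis norm_triangle_sub add.commute)
    also have "\<dots> \<le> norm z + norm (Lb y - L0) * norm (x y)" using d n1 by simp
    also have "\<dots> \<le> norm z + B / 2 * norm (x y)" using elim(1) by (intro add_left_mono mult_right_mono) auto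
    finally have "B / 2 * norm (x y) \<le> norm z" by simp
    then have bx: "norm (x y) \<le> 2 * norm z / B" using B(1) by (simp add: field_simps)
    have "B * norm (x y - x y0) \<le> norm (blinfun_apply L0 (x y - x y0))" by (rule B(2))
    also have "blinfun_apply L0 (x y - x y0) = blinfun_apply (L0 - Lb y) (x y)"
      using d x0 by (simp add: blinfun.diff_right)
    also have "norm \<dots> \<le> norm (Lb y - L0) * (2 * norm z / B)"
      using n1 bx by (meson mult_left_mono norm_ge_zero order_trans)
    finally have "B * norm (x y - x y0) \<le> norm (Lb y - L0) * (2 * norm z / B)" .
    then show ?case using B(1) by (simp add: field_simps power2_eq_square)
  qed
  moreover have "((\<lambda>y. (2 * norm z / B^2) * norm (Lb y - L0)) \<longlongrightarrow> 0) (at y0)"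
    using tL by (intro tendsto_mult_right_zero) (simp add: tendsto_norm_zero_iff LIM_zero)
  ultimately have "((\<lambda>y. x y - x y0) \<longlongrightarrow> 0) (at y0)" by (rule Lim_null_comparison)
  then show ?thesis unfolding isCont_def x_def[symmetric] by (rule LIM_zero_cancel)
qed

lemma eig_IFT:
  fixes A :: "real^'d \<Rightarrow> complex^'s^'s" and DA :: "real^'d \<Rightarrow> real^'d \<Rightarrow> complex^'s^'s"
    and p e :: "complex^'s"
  assumes dA: "\<And>th. (A has_derivative DA th) (at th)"
    and cDA: "\<And>h. continuous_on UNIV (\<lambda>th. DA th h)"
    and pe: "pdot p e = 1"
    and left: "\<And>w. pdot p (A 0 *v w) = pdot p w"
    and ev: "A 0 *v e = e"
    and ker: "\<And>w. A 0 *v w = w \<Longrightarrow> \<exists>c. w = c *s e"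
  obtains N W lam vv lam' vv' where "open N" "0 \<in> N" "open W" "(0, 1, e) \<in> W"
    "\<And>th. th \<in> N \<Longrightarrow> A th *v vv th = lam th *s vv th \<and> pdot p (vv th) = 1 \<and> (th, lam th, vv th) \<in> W"
    "\<And>th. th \<in> N \<Longrightarrow> (lam has_derivative lam' th) (at th)"
    "\<And>th. th \<in> N \<Longrightarrow> (vv has_derivative vv' th) (at th)"
    "lam 0 = 1" "vv 0 = e"
    "\<And>h. isCont (\<lambda>th. vv' th h) 0"
    "\<And>th l v. (th, l, v) \<in> W \<Longrightarrow> A th *v v = l *s v \<Longrightarrow> pdot p v = 1 \<Longrightarrow> th \<in> N \<and> l = lam th \<and> v = vv th"
proof -
  define Phi :: "(real^'d) \<times> complex \<times> (complex^'s) \<Rightarrow> (real^'d) \<times> complex \<times> (complex^'s)"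
    where "Phi = (\<lambda>(th, l, v). (th, pdot p v - 1, A th *v v - l *s v))"
  define PD :: "(real^'d) \<times> complex \<times> (complex^'s) \<Rightarrow> (real^'d) \<times> complex \<times> (complex^'s) \<Rightarrow> (real^'d) \<times> complex \<times> (complex^'s)"
    where "PD x = (\<lambda>(h, m, w). (h, pdot p w, A (fst x) *v w + DA (fst x) h *v snd (snd x) - (fst (snd x) *s w + m *s snd (snd x))))" for x
  have dPhi: "(Phi has_derivative PD x) (at x)" for x
    unfolding Phi_def PD_def by (rule Phi_deriv[OF dA])
  have blPD: "bounded_linear (PD x)" for x using dPhi[of x] by (rule has_derivative_bounded_linear)
  define Pf where "Pf x = Blinfun (PD x)" for x
  have Pf_apply: "blinfun_apply (Pf x) = PD x" for x
    unfolding Pf_def by (rule bounded_linear_Blinfun_apply[OF blPD])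
  have contA: "continuous_on UNIV A"
    using dA by (meson differentiable_def differentiable_imp_continuous_on differentiable_on_def)
  have contPf: "continuous_on UNIV Pf"
  proof (rule continuous_on_blinfun_componentwise)
    fix i :: "(real^'d) \<times> complex \<times> (complex^'s)"
    obtain h m w where i: "i = (h, m, w)" by (cases i) auto
    have c1: "continuous_on UNIV (\<lambda>x::(real^'d) \<times> complex \<times> (complex^'s). A (fst x))"
      by (intro continuous_on_compose2[OF contA] continuous_intros) auto
    have c2: "continuous_on UNIV (\<lambda>x::(real^'d) \<times> complex \<times> (complex^'s). DA (fst x) h)"
      by (intro continuous_on_compose2[OF cDA[of h]] continuous_intros) auto
    show "continuous_on UNIV (\<lambda>x. blinfun_apply (Pf x) i)"
      unfolding Pf_apply PD_def i
      by (simp, intro continuous_intros c1 c2 bounded_bilinear.continuous_on[OF bb_mv]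
         bounded_bilinear.continuous_on[OF bb_sv])
  qed
  define x0 :: "(real^'d) \<times> complex \<times> (complex^'s)" where "x0 = (0, 1, e)"
  have Phix0: "Phi x0 = (0, 0, 0)" unfolding Phi_def x0_def using pe ev by simp
  have injPD: "inj (PD x0)"
  proof -
    have "z = 0" if "PD x0 z = 0" for z
    proof -
      obtain h m w where z: "z = (h, m, w)" by (cases z) auto
      from that have h: "h = 0" and pw: "pdot p w = 0" and eq: "A 0 *v w + DA 0 0 *v e - (w + m *s e) = 0"
        unfolding PD_def x0_def z by (auto simp: zero_prod_def)
      have DA0: "DA 0 0 = 0" using has_derivative_bounded_linear[OF dA[of 0]] linear_0 bounded_linear.linear by blast
      have eq2: "A 0 *v w - w = m *s e" using eq DA0 by (simp add: algebra_simps)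
      have "pdot p (A 0 *v w - w) = m * pdot p e" using eq2 pdot_simps by simp
      then have "m = 0" using left pw pe by (simp add: pdot_simps)
      then have "A 0 *v w = w" using eq2 by simp
      then obtain c where c: "w = c *s e" using ker by blast
      then have "c = 0" using pw pe by (simp add: pdot_simps)
      then have "w = 0" using c by simp
      then show ?thesis using z h \<open>m = 0\<close> by (simp add: zero_prod_def)
    qed
    then show ?thesis
      using blPD[of x0] by (metis bounded_linear.linear linear_inj_iff_eq_0 diff_zero)
  qed
  obtain gl where gl: "linear gl" "gl \<circ> PD x0 = id"
    using linear_injective_left_inverse[OF bounded_linear.linear[OF blPD] injPD] by blast
  have blgl: "bounded_linear gl" using gl(1) by (simp add: linear_conv_bounded_linear)
  define invf where "invf = Blinfun gl"
  have invf: "invf o\<^sub>L Pf x0 = id_blinfun"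
    by (rule blinfun_eqI) (simp add: invf_def bounded_linear_Blinfun_apply[OF blgl] Pf_apply
        pointfree_idE[OF gl(2)])
  obtain U' V gi gi' where U': "open U'" "x0 \<in> U'" and V: "open V" "Phi x0 \<in> V"
    and hom: "homeomorphism U' V Phi gi"
    and dgi: "\<And>y. y \<in> V \<Longrightarrow> (gi has_derivative (gi' y)) (at y)"
    and gi': "\<And>y. y \<in> V \<Longrightarrow> gi' y = inv (PD (gi y))"
    and bijP: "\<And>y. y \<in> V \<Longrightarrow> bij (PD (gi y))"
  proof (rule inverse_function_theorem[of UNIV Phi Pf x0 invf])
    show "\<And>x. x \<in> UNIV \<Longrightarrow> (Phi has_derivative blinfun_apply (Pf x)) (at x)" using dPhi Pf_apply by simp
  qed (use contPf invf that Pf_apply in auto)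
  define emb :: "real^'d \<Rightarrow> (real^'d) \<times> complex \<times> (complex^'s)" where "emb th = (th, 0, 0)" for th
  define N where "N = emb -` V"
  have isCemb: "isCont emb x" for x unfolding emb_def by (intro continuous_intros)
  have openN: "open N" unfolding N_def by (rule continuous_open_vimage) (use isCemb V in auto)
  have emb0: "emb 0 = Phi x0" using Phix0 by (simp add: emb_def)
  have N0: "0 \<in> N" unfolding N_def using emb0 V by simp
  define lam where "lam th = fst (snd (gi (emb th)))" for th
  define vv where "vv th = snd (snd (gi (emb th)))" for th
  have sol: "gi (emb th) = (th, lam th, vv th) \<and> A th *v vv th = lam th *s vv th \<and> pdot p (vv th) = 1 \<and> gi (emb th) \<in> U'"
    if "th \<in> N" for th
  proof -
    have y: "emb th \<in> V" using that by (simp add: N_def)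
    have inU: "gi (emb th) \<in> U'" using homeomorphism_image2[OF hom] y by blast
    have ph: "Phi (gi (emb th)) = emb th" by (rule homeomorphism_apply2[OF hom y])
    obtain a b c where abc: "gi (emb th) = (a, b, c)" by (cases "gi (emb th)") auto
    from ph abc have "Phi (a, b, c) = (th, 0, 0)" by (simp add: emb_def)
    then have "a = th" "pdot p c - 1 = 0" "A a *v c - b *s c = 0"
      unfolding Phi_def by auto
    then show ?thesis using abc inU by (simp add: lam_def vv_def)
  qed
  have demb: "(emb has_derivative (\<lambda>h. (h, 0, 0))) (at th)" for th
    unfolding emb_def by (intro has_derivative_Pair has_derivative_ident has_derivative_const)
  have dgie: "((\<lambda>th. gi (emb th)) has_derivative (\<lambda>h. gi' (emb th) (h, 0, 0))) (at th)" if "th \<in> N" for th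
    using has_derivative_compose[OF demb dgi, of th] that by (simp add: N_def)
  define lam' where "lam' th h = fst (snd (gi' (emb th) (h, 0, 0)))" for th h
  define vv' where "vv' th h = snd (snd (inv (PD (gi (emb th))) (h, 0, 0)))" for th h
  have dlam: "(lam has_derivative lam' th) (at th)" if "th \<in> N" for th
    unfolding lam_def[abs_def] lam'_def using dgie[OF that]
    by (intro has_derivative_fst has_derivative_snd)
  have dvv: "(vv has_derivative vv' th) (at th)" if "th \<in> N" for th
  proof -
    have "(vv has_derivative (\<lambda>h. snd (snd (gi' (emb th) (h, 0, 0))))) (at th)"
      unfolding vv_def[abs_def] using dgie[OF that]
      by (intro has_derivative_snd)
    moreover have "gi' (emb th) = inv (PD (gi (emb th)))" using gi' that by (simp add: N_def)
    ultimately show ?thesis by (simp add: vv'_def[abs_def])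
  qed
  have gi0: "gi (emb 0) = x0" using emb0 homeomorphism_apply1[OF hom U'(2)] by simp
  have lam0: "lam 0 = 1" and vv0: "vv 0 = e" using gi0 by (simp_all add: lam_def vv_def x0_def)
  have cvv': "isCont (\<lambda>th. vv' th h) 0" for h
  proof -
    have cgi: "isCont gi (emb 0)"
      using homeomorphism_cont2[OF hom] V emb0 continuous_on_eq_continuous_at by metis
    have "isCont (\<lambda>th. gi (emb th)) 0" by (rule continuous_at_compose[OF isCemb cgi, unfolded o_def])
    moreover have "isCont Pf (gi (emb 0))" using contPf continuous_on_eq_continuous_at open_UNIV UNIV_I by blast
    ultimately have cL: "isCont (\<lambda>th. Pf (gi (emb th))) 0"
      by (rule continuous_at_compose[unfolded o_def])
    have evb: "eventually (\<lambda>th. bij (blinfun_apply (Pf (gi (emb th))))) (nhds 0)"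
    proof -
      have "eventually (\<lambda>th. th \<in> N) (nhds 0)" using openN N0 by (rule eventually_nhds_in_open)
      then show ?thesis by eventually_elim (simp add: Pf_apply bijP N_def)
    qed
    have "isCont (\<lambda>th. inv (blinfun_apply (Pf (gi (emb th)))) (h, 0, 0)) 0"
      by (rule inv_cont[OF cL evb])
    then have "isCont (\<lambda>th. snd (snd (inv (blinfun_apply (Pf (gi (emb th)))) (h, 0, 0)))) 0"
      unfolding isCont_def by (intro tendsto_snd)
    then show ?thesis by (simp add: vv'_def Pf_apply)
  qed
  have uniq: "th \<in> N \<and> l = lam th \<and> v = vv th"
    if "(th, l, v) \<in> U'" "A th *v v = l *s v" "pdot p v = 1" for th l v
  proof -
    have ph: "Phi (th, l, v) = emb th" using that by (simp add: Phi_def emb_def)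
    have "emb th \<in> V" using homeomorphism_image1[OF hom] that(1) ph by (metis image_eqI)
    then have thN: "th \<in> N" by (simp add: N_def)
    have "gi (emb th) = (th, l, v)" using homeomorphism_apply1[OF hom that(1)] ph by simp
    then show ?thesis using thN sol[OF thN] by simp
  qed
  show ?thesis
  proof (rule that[of N U' vv lam lam' vv'])
    show "(0, 1, e) \<in> U'" using U'(2) x0_def by simp
    show "\<And>th. th \<in> N \<Longrightarrow> A th *v vv th = lam th *s vv th \<and> pdot p (vv th) = 1 \<and> (th, lam th, vv th) \<in> U'"
      using sol by metis
  qed (fact openN N0 U'(1) dlam dvv lam0 vv0 cvv' uniq)+
qed

lemma has_derivative_vecI:
  fixes f :: "'a::euclidean_space \<Rightarrow> 'b::real_normed_vector ^ 'n"
  assumes "\<And>i. ((\<lambda>x. f x $ i) has_derivative (\<lambda>h. f' h $ i)) (at x)"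
  shows "(f has_derivative f') (at x)"
proof -
  have bl: "\<And>i. bounded_linear (\<lambda>h. f' h $ i)" using assms has_derivative_bounded_linear by blast
  have lin: "linear f'"
  proof (rule linearI)
    fix a b show "f' (a + b) = f' a + f' b"
      by (simp add: vec_eq_iff linear_add[OF bounded_linear.linear[OF bl]])
  next
    fix r a show "f' (r *\<^sub>R a) = r *\<^sub>R f' a"
      by (simp add: vec_eq_iff linear_scale[OF bounded_linear.linear[OF bl]])
  qed
  have "((\<lambda>y. ((f y - f x) - f' (y - x)) /\<^sub>R norm (y - x)) \<longlongrightarrow> 0) (at x)"
  proof (rule vec_tendstoI)
    fix i
    have "((\<lambda>y. ((f y $ i - f x $ i) - f' (y - x) $ i) /\<^sub>R norm (y - x)) \<longlongrightarrow> 0) (at x)"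
      using assms[of i] unfolding has_derivative_at_within by simp
    then show "((\<lambda>y. (((f y - f x) - f' (y - x)) /\<^sub>R norm (y - x)) $ i) \<longlongrightarrow> 0 $ i) (at x)"
      by simp
  qed
  then show ?thesis
    unfolding has_derivative_at_within using lin by (simp add: linear_conv_bounded_linear)
qed

lemma pow_le_exp:
  fixes t :: real assumes "0 \<le> t" shows "t ^ n \<le> fact n * exp t"
proof -
  have s: "(\<lambda>k. t^k /\<^sub>R fact k) sums exp t" by (rule exp_converges)
  have "(\<Sum>k<Suc n. t^k /\<^sub>R fact k) \<le> exp t"
    using sum_le_suminf[OF sums_summable[OF s], of "{..<Suc n}"] sums_unique[OF s] assms by simp
  moreover have "t^n /\<^sub>R fact n \<le> (\<Sum>k<Suc n. t^k /\<^sub>R fact k)"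
    by (rule member_le_sum) (use assms in auto)
  moreover have "t^n /\<^sub>R fact n = t^n / fact n" by (simp add: field_simps)
  ultimately have "t^n / fact n \<le> exp t" by linarith
  then show ?thesis by (simp add: field_simps)
qed

definition cm :: "('s \<Rightarrow> 's \<Rightarrow> int ^ 'd \<Rightarrow> real) \<Rightarrow> 's \<Rightarrow> 's \<Rightarrow> int ^ 'd \<Rightarrow> complex" where
  "cm mu i j x = complex_of_real (mu i j x)"

lemma mom_exp:
  fixes c :: "int ^ 'd \<Rightarrow> complex"
  assumes "(\<lambda>x. exp (norm (intvec x)) * norm (c x)) summable_on UNIV"
  shows "mom n c"
  unfolding mom_def
proof (rule summable_on_comparison_test)
  show "(\<lambda>x. fact n * (exp (norm (intvec x)) * norm (c x))) summable_on UNIV"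
    using assms by (rule summable_on_cmult_right)
  fix x :: "int ^ 'd"
  show "norm (intvec x) ^ n * norm (c x) \<le> fact n * (exp (norm (intvec x)) * norm (c x))"
  proof -
    have "norm (intvec x) ^ n * norm (c x) \<le> (fact n * exp (norm (intvec x))) * norm (c x)"
      by (rule mult_right_mono[OF pow_le_exp]) auto
    then show ?thesis by (simp only: mult.assoc)
  qed
next
  fix x :: "int ^ 'd"
  show "0 \<le> norm (intvec x) ^ n * norm (c x)" by simp
qed

lemma mom_cm:
  assumes "exp_moments mu"
  shows "mom n (cm mu i j)"
proof (rule mom_exp)
  from assms have h: "(\<lambda>x. exp (1 * norm (intvec x)) * mu i j x) summable_on UNIV"
    unfolding exp_moments_def by (metis zero_less_one)
  have h2: "(\<lambda>x. exp (norm (intvec x)) * mu i j x) summable_on UNIV" using h by (simp only: mult_1)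
  have "(\<lambda>x. norm (exp (norm (intvec x)) * mu i j x)) summable_on UNIV"
    using summable_on_iff_abs_summable_on_real[THEN iffD1, OF h2] by simp
  then show "(\<lambda>x. exp (norm (intvec x)) * norm (cm mu i j x)) summable_on UNIV"
    by (simp add: cm_def abs_mult)
qed

lemma mom_cI_all:
  assumes "\<And>n. mom n c" shows "mom n (cI l c)"
  by (rule mom_cI, rule assms)

lemma muhat_FT: "muhat mu th $ i $ j = FT (cm mu i j) th"
  by (simp add: muhat_def FT_def cm_def)

definition DA :: "('s::finite \<Rightarrow> 's \<Rightarrow> int ^ 'd \<Rightarrow> real) \<Rightarrow> real^'d \<Rightarrow> real^'d \<Rightarrow> complex^'s^'s" where
  "DA mu th h = (\<chi> i j. \<Sum>q\<in>UNIV. of_real (h$q) * FT (cI q (cm mu i j)) th)"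

definition D2A :: "('s::finite \<Rightarrow> 's \<Rightarrow> int ^ 'd \<Rightarrow> real) \<Rightarrow> 'd \<Rightarrow> real^'d \<Rightarrow> real^'d \<Rightarrow> complex^'s^'s" where
  "D2A mu l th h = (\<chi> i j. \<Sum>q\<in>UNIV. of_real (h$q) * FT (cI q (cI l (cm mu i j))) th)"

lemma FT_deriv_all:
  assumes "\<And>n. mom n c"
  shows "(FT c has_derivative (\<lambda>h. \<Sum>l\<in>UNIV. of_real (h$l) * FT (cI l c) th)) (at th)"
  by (rule FT_has_derivative) (use assms in auto)

lemma A_deriv:
  assumes "exp_moments mu"
  shows "(muhat mu has_derivative DA mu th) (at th)"
  apply (rule has_derivative_vecI)
  apply (rule has_derivative_vecI)
  apply (simp only: muhat_FT DA_def vec_lambda_beta)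
  apply (rule FT_deriv_all[OF mom_cm[OF assms]])
  done

lemma sum_axis: "(\<Sum>q\<in>UNIV. complex_of_real (axis l (1::real) $ q) * F q) = F l"
proof -
  have "\<And>q. complex_of_real (axis l 1 $ q) * F q = (if q = l then F q else 0)" by (simp add: axis_def)
  then show ?thesis by simp
qed

lemma DA_axis: "DA mu th (axis l 1) = (\<chi> i j. FT (cI l (cm mu i j)) th)"
  unfolding DA_def by (simp add: sum_axis)

lemma DA_deriv:
  assumes "exp_moments mu"
  shows "((\<lambda>th. DA mu th (axis l 1)) has_derivative D2A mu l th) (at th)"
  apply (rule has_derivative_vecI)
  apply (rule has_derivative_vecI)
  apply (simp only: DA_axis D2A_def vec_lambda_beta)
  apply (rule FT_deriv_all[OF mom_cI_all[OF mom_cm[OF assms]]])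
  done

lemma FT_cont:
  assumes "\<And>n. mom n c" shows "continuous_on UNIV (FT c)"
  using FT_deriv_all[OF assms] 
  by (meson has_derivative_continuous continuous_at_imp_continuous_on)

lemma DA_cont:
  assumes "exp_moments mu"
  shows "continuous_on UNIV (\<lambda>th. DA mu th h)"
  unfolding DA_def
  by (intro continuous_on_vec_lambda continuous_intros FT_cont[THEN continuous_on_subset]
      mom_cI_all mom_cm assms) auto

lemma Pn_nonneg:
  assumes "MA_kernel mu" shows "0 \<le> Pn mu n i j x"
  using assms
proof (induction n arbitrary: j x)
  case 0 then show ?case by simp
next
  case (Suc n)
  have "\<And>l y. 0 \<le> Pn mu n i l y * mu l j (x - y)"
    using Suc assms unfolding MA_kernel_def by (simp add: mult_nonneg_nonneg)
  then show ?case by (simp add: sum_nonneg infsum_nonneg)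
qed

lemma Mtrans_nonneg: "MA_kernel mu \<Longrightarrow> 0 \<le> Mtrans mu i j"
  unfolding MA_kernel_def Mtrans_def by (simp add: infsum_nonneg)

lemma Mtrans_rows: "MA_kernel mu \<Longrightarrow> (\<Sum>j\<in>UNIV. Mtrans mu i j) = 1"
  unfolding MA_kernel_def Mtrans_def by simp

lemma Mtrans_pos:
  assumes "MA_kernel mu" "mu i j z > 0" shows "Mtrans mu i j > 0"
proof -
  have "sum (mu i j) {z} \<le> infsum (mu i j) UNIV"
    using assms unfolding MA_kernel_def by (intro finite_sum_le_infsum) auto
  then show ?thesis using assms(2) by (simp add: Mtrans_def)
qed

lemma maxprin:
  fixes mu :: "'s::finite \<Rightarrow> 's \<Rightarrow> int ^ 'd \<Rightarrow> real" and u :: "'s \<Rightarrow> real"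
  assumes K: "MA_kernel mu" and I: "MA_irreducible mu"
    and harm: "\<And>i. (\<Sum>j\<in>UNIV. Mtrans mu i j * u j) = u i"
  shows "u i = u j"
proof -
  have fin: "finite (range u)" "range u \<noteq> {}" by auto
  have "Max (range u) \<in> range u" using Max_in[OF fin] .
  then obtain i0 where i0': "Max (range u) = u i0" by (rule rangeE)
  then have i0: "u i0 = Max (range u)" by simp
  have le: "u j' \<le> u i0" for j' using i0 fin by simp
  have step: "u j' = u i0" if "u l = u i0" "Mtrans mu l j' > 0" for l j'
  proof -
    have "(\<Sum>k\<in>UNIV. Mtrans mu l k * (u i0 - u k)) = u i0 * (\<Sum>k\<in>UNIV. Mtrans mu l k) - (\<Sum>k\<in>UNIV. Mtrans mu l k * u k)"
      by (simp add: algebra_simps sum_subtractf sum_distrib_left)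
    also have "\<dots> = 0" using Mtrans_rows[OF K, of l] harm[of l] that(1) by simp
    finally have "(\<Sum>k\<in>UNIV. Mtrans mu l k * (u i0 - u k)) = 0" .
    moreover have "\<forall>k\<in>UNIV. 0 \<le> Mtrans mu l k * (u i0 - u k)"
      using Mtrans_nonneg[OF K] le by (simp add: mult_nonneg_nonneg)
    ultimately have "Mtrans mu l j' * (u i0 - u j') = 0" by (simp add: sum_nonneg_eq_0_iff)
    then show ?thesis using that(2) by simp
  qed
  have claim: "Pn mu n i0 j' x > 0 \<Longrightarrow> u j' = u i0" for n j' x
  proof (induction n arbitrary: j' x)
    case 0 then show ?case by (simp split: if_splits)
  next
    case (Suc n)
    have "(\<Sum>l\<in>UNIV. infsum (\<lambda>y. Pn mu n i0 l y * mu l j' (x - y)) UNIV) \<noteq> 0"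
      using Suc.prems by simp
    have "\<exists>l. infsum (\<lambda>y. Pn mu n i0 l y * mu l j' (x - y)) UNIV \<noteq> 0"
    proof (rule ccontr)
      assume "\<not> ?thesis"
      then have "(\<Sum>l\<in>UNIV. infsum (\<lambda>y. Pn mu n i0 l y * mu l j' (x - y)) UNIV) = 0" by simp
      with Suc.prems show False by simp
    qed
    then obtain l where l: "infsum (\<lambda>y. Pn mu n i0 l y * mu l j' (x - y)) UNIV \<noteq> 0" by blast
    have "\<exists>y. Pn mu n i0 l y * mu l j' (x - y) \<noteq> 0"
    proof (rule ccontr)
      assume "\<not> ?thesis"
      then have "(\<lambda>y. Pn mu n i0 l y * mu l j' (x - y)) = (\<lambda>_. 0)" by auto
      with l show False by simp
    qed
    then obtain y where y: "Pn mu n i0 l y * mu l j' (x - y) \<noteq> 0" by blast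
    have "Pn mu n i0 l y \<noteq> 0" "mu l j' (x - y) \<noteq> 0" using y by auto
    then have p1: "Pn mu n i0 l y > 0" and p2: "mu l j' (x - y) > 0"
      using Pn_nonneg[OF K, of n i0 l y] K unfolding MA_kernel_def by (auto simp: order_less_le)
    have "u l = u i0" by (rule Suc.IH[OF p1])
    then show ?case using step Mtrans_pos[OF K p2] by blast
  qed
  have all: "u j' = u i0" for j'
  proof -
    obtain n where "Pn mu n i0 j' 0 > 0" using I unfolding MA_irreducible_def by blast
    then show ?thesis by (rule claim)
  qed
  show ?thesis using all[of i] all[of j] by simp
qed

definition ev1 :: "complex^'s" where "ev1 = (\<chi> i. 1)"
definition pv :: "('s \<Rightarrow> real) \<Rightarrow> complex^'s" where "pv pr = (\<chi> i. complex_of_real (pr i))"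

lemma muhat0:
  assumes "MA_kernel mu"
  shows "muhat mu 0 $ i $ j = complex_of_real (Mtrans mu i j)"
proof -
  have "(mu i j has_sum Mtrans mu i j) UNIV" using assms unfolding MA_kernel_def Mtrans_def by simp
  then have "((\<lambda>x. complex_of_real (mu i j x)) has_sum complex_of_real (Mtrans mu i j)) UNIV"
    by (rule has_sum_of_real)
  then show ?thesis unfolding muhat_def by (simp add: infsumI)
qed

lemma P_mv: "MA_kernel mu \<Longrightarrow> (muhat mu 0 *v w) $ i = (\<Sum>j\<in>UNIV. complex_of_real (Mtrans mu i j) * w $ j)"
  by (simp add: matrix_vector_mult_def muhat0)

lemma ker_P:
  fixes mu :: "'s::finite \<Rightarrow> 's \<Rightarrow> int ^ 'd \<Rightarrow> real" and w :: "complex^'s"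
  assumes K: "MA_kernel mu" and I: "MA_irreducible mu" and w: "muhat mu 0 *v w = w"
  shows "\<exists>c. w = c *s ev1"
proof -
  have eq: "(\<Sum>j\<in>UNIV. complex_of_real (Mtrans mu i j) * w $ j) = w $ i" for i
    using w P_mv[OF K, of w i] by simp
  have re: "(\<Sum>j\<in>UNIV. Mtrans mu i j * Re (w $ j)) = Re (w $ i)" for i
    using arg_cong[OF eq[of i], of Re] by (simp add: Re_sum)
  have im: "(\<Sum>j\<in>UNIV. Mtrans mu i j * Im (w $ j)) = Im (w $ i)" for i
    using arg_cong[OF eq[of i], of Im] by (simp add: Im_sum)
  obtain i0 :: 's where True by simp
  have "w $ i = w $ i0" for i
    using maxprin[OF K I re, of i i0] maxprin[OF K I im, of i i0] by (simp add: complex_eq_iff)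
  then have "w = (w $ i0) *s ev1" by (simp add: vec_eq_iff ev1_def)
  then show ?thesis by blast
qed

lemma ev_P: "MA_kernel mu \<Longrightarrow> muhat mu 0 *v ev1 = ev1"
  using Mtrans_rows[of mu]
  by (simp add: vec_eq_iff P_mv ev1_def flip: of_real_sum)

lemma pe: "stationary mu pr \<Longrightarrow> pdot (pv pr) ev1 = 1"
  unfolding stationary_def pdot_def pv_def ev1_def by (simp flip: of_real_sum)

lemma left_P:
  assumes K: "MA_kernel mu" and S: "stationary mu pr"
  shows "pdot (pv pr) (muhat mu 0 *v w) = pdot (pv pr) w"
proof -
  have "pdot (pv pr) (muhat mu 0 *v w) = (\<Sum>i\<in>UNIV. complex_of_real (pr i) * (\<Sum>j\<in>UNIV. complex_of_real (Mtrans mu i j) * w $ j))"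
    by (simp add: pdot_def pv_def P_mv[OF K])
  also have "\<dots> = (\<Sum>i\<in>UNIV. \<Sum>j\<in>UNIV. complex_of_real (pr i * Mtrans mu i j) * w $ j)"
    by (simp add: sum_distrib_left mult.assoc)
  also have "\<dots> = (\<Sum>j\<in>UNIV. \<Sum>i\<in>UNIV. complex_of_real (pr i * Mtrans mu i j) * w $ j)"
    by (rule sum.swap)
  also have "\<dots> = (\<Sum>j\<in>UNIV. (\<Sum>i\<in>UNIV. complex_of_real (pr i * Mtrans mu i j)) * w $ j)"
    by (simp add: sum_distrib_right)
  also have "\<dots> = (\<Sum>j\<in>UNIV. complex_of_real (pr j) * w $ j)"
  proof -
    have st: "(\<Sum>i\<in>UNIV. complex_of_real (pr i * Mtrans mu i j)) = complex_of_real (pr j)" for j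
    proof -
      have "(\<Sum>i\<in>UNIV. pr i * Mtrans mu i j) = pr j" using S unfolding stationary_def by blast
      then show ?thesis by (metis of_real_sum)
    qed
    show ?thesis by (simp only: st)
  qed
  finally show ?thesis by (simp add: pdot_def pv_def)
qed

lemma muhat_bound:
  assumes K: "MA_kernel mu"
  shows "cmod (muhat mu th $ i $ j) \<le> Mtrans mu i j"
proof -
  have s: "mu i j summable_on UNIV" using K unfolding MA_kernel_def by simp
  have "cmod (muhat mu th $ i $ j) \<le> infsum (\<lambda>x. norm (cis (intvec x \<bullet> th) * complex_of_real (mu i j x))) UNIV"
    unfolding muhat_def vec_lambda_beta
  proof (rule norm_infsum_bound)
    show "(\<lambda>x. norm (cis (intvec x \<bullet> th) * complex_of_real (mu i j x))) summable_on UNIV"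
      using K unfolding MA_kernel_def by (simp add: norm_mult)
  qed
  also have "\<dots> = Mtrans mu i j"
    using K unfolding MA_kernel_def Mtrans_def by (simp add: norm_mult)
  finally show ?thesis .
qed

lemma eig_bound:
  assumes K: "MA_kernel mu" and ev: "is_eigenvalue (muhat mu th) l"
  shows "cmod l \<le> 1"
proof -
  obtain v where v: "v \<noteq> 0" "muhat mu th *v v = l *s v" using ev unfolding is_eigenvalue_def by blast
  have fin: "finite (range (\<lambda>j. cmod (v $ j)))" "range (\<lambda>j. cmod (v $ j)) \<noteq> {}" by auto
  have "Max (range (\<lambda>j. cmod (v $ j))) \<in> range (\<lambda>j. cmod (v $ j))" using Max_in[OF fin] .
  then obtain i where i': "Max (range (\<lambda>j. cmod (v $ j))) = cmod (v $ i)" by (rule rangeE)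
  then have i: "cmod (v $ i) = Max (range (\<lambda>j. cmod (v $ j)))" by simp
  have le: "cmod (v $ j) \<le> cmod (v $ i)" for j using i fin by simp
  have pos: "cmod (v $ i) > 0"
  proof (rule ccontr)
    assume "\<not> cmod (v $ i) > 0"
    then have "cmod (v $ i) = 0" by simp
    then have "\<forall>j. v $ j = 0" using le by (simp add: order_antisym)
    then show False using v(1) by (simp add: vec_eq_iff)
  qed
  have "cmod l * cmod (v $ i) = cmod ((muhat mu th *v v) $ i)" using v(2) by (simp add: norm_mult)
  also have "\<dots> = cmod (\<Sum>j\<in>UNIV. muhat mu th $ i $ j * v $ j)" by (simp add: matrix_vector_mult_def)
  also have "\<dots> \<le> (\<Sum>j\<in>UNIV. cmod (muhat mu th $ i $ j * v $ j))" by (rule norm_sum)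
  also have "\<dots> \<le> (\<Sum>j\<in>UNIV. Mtrans mu i j * cmod (v $ i))"
    by (intro sum_mono) (simp add: norm_mult mult_mono muhat_bound[OF K] le Mtrans_nonneg[OF K])
  also have "\<dots> = cmod (v $ i)" using Mtrans_rows[OF K, of i] by (simp flip: sum_distrib_right)
  finally show ?thesis using pos by simp
qed

lemma mv_scaleR: "(A::complex^'s^'t) *v (r *\<^sub>R v) = r *\<^sub>R (A *v v)"
  by (simp add: vec_eq_iff matrix_vector_mult_def scaleR_sum_right algebra_simps)

lemma sv_scaleR: "(c::complex) *s (r *\<^sub>R v) = r *\<^sub>R (c *s (v::complex^'s))"
  by (simp add: vec_eq_iff algebra_simps)

lemma mv_smult: "(A::complex^'s^'t) *v (c *s v) = c *s (A *v v)"
  by (simp add: vec_eq_iff matrix_vector_mult_def sum_distrib_left algebra_simps)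

lemma k0_eq:
  assumes K: "MA_kernel mu" and S: "stationary mu pr"
    and L: "leading_eigenvalue (muhat mu 0) k0"
  shows "k0 = 1"
proof (rule ccontr)
  assume ne: "k0 \<noteq> 1"
  have "ev1 \<noteq> (0::complex^'s)" by (simp add: ev1_def vec_eq_iff)
  then have "is_eigenvalue (muhat mu 0) 1" unfolding is_eigenvalue_def using ev_P[OF K] by (intro exI[of _ ev1]) simp
  then have "cmod 1 < cmod k0" using L ne unfolding leading_eigenvalue_def by auto
  moreover have "cmod k0 \<le> 1" using L eig_bound[OF K] unfolding leading_eigenvalue_def by blast
  ultimately show False by simp
qed

lemma ident:
  fixes mu :: "'s::finite \<Rightarrow> 's \<Rightarrow> int ^ 'd \<Rightarrow> real" and k lam :: "real^'d \<Rightarrow> complex"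
    and vv :: "real^'d \<Rightarrow> complex^'s"
  assumes K: "MA_kernel mu" and X: "exp_moments mu" and S: "stationary mu pr" and I: "MA_irreducible mu"
    and U: "open U" "0 \<in> U" "\<forall>th\<in>U. leading_eigenvalue (muhat mu th) (k th)"
    and N: "open N" "0 \<in> N" and W: "open W" "(0, 1, ev1) \<in> W"
    and sol: "\<And>th. th \<in> N \<Longrightarrow> muhat mu th *v vv th = lam th *s vv th \<and> pdot (pv pr) (vv th) = 1"
    and clam: "isCont lam 0" and lam0: "lam 0 = 1"
    and uniq: "\<And>th l v. (th, l, v) \<in> W \<Longrightarrow> muhat mu th *v v = l *s v \<Longrightarrow> pdot (pv pr) v = 1 \<Longrightarrow> l = lam th"
  shows "\<exists>r>0. \<forall>th. norm th < r \<longrightarrow> th \<in> U \<and> th \<in> N \<and> k th = lam th"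
proof (rule ccontr)
  assume neg: "\<not> ?thesis"
  define p where "p = pv pr"
  have "open (U \<inter> N)" "0 \<in> U \<inter> N" using U N by auto
  then obtain r0 where r0: "r0 > 0" "ball 0 r0 \<subseteq> U \<inter> N" using open_contains_ball by blast
  have ex: "\<exists>th. norm th < min r0 (1 / real (Suc n)) \<and> k th \<noteq> lam th" for n
  proof -
    have "min r0 (1 / real (Suc n)) > 0" using r0 by simp
    then obtain th where th: "norm th < min r0 (1 / real (Suc n))" "\<not> (th \<in> U \<and> th \<in> N \<and> k th = lam th)"
      using neg by blast
    then have "th \<in> U \<inter> N" using r0 by (auto simp: dist_norm)
    then show ?thesis using th by auto
  qed
  then obtain th where th: "\<And>n. norm (th n) < min r0 (1 / real (Suc n)) \<and> k (th n) \<noteq> lam (th n)"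
    by metis
  have thUN: "th n \<in> U" "th n \<in> N" for n using th[of n] r0 by (auto simp: dist_norm)
  have th0: "th \<longlonglongrightarrow> 0" by (rule LIMSEQ_norm_0) (use th in auto)
  have "\<exists>u. u \<noteq> 0 \<and> muhat mu (th n) *v u = k (th n) *s u" for n
    using U(3) thUN unfolding leading_eigenvalue_def is_eigenvalue_def by blast
  then obtain u where u: "\<And>n. u n \<noteq> 0 \<and> muhat mu (th n) *v u n = k (th n) *s u n" by metis
  define un where "un n = (1 / norm (u n)) *\<^sub>R u n" for n
  have un1: "norm (un n) = 1" for n using u[of n] by (simp add: un_def)
  have uneq: "muhat mu (th n) *v un n = k (th n) *s un n" for n
    using u[of n] by (simp add: un_def mv_scaleR sv_scaleR)
  have kb: "cmod (k (th n)) \<le> 1" for n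
    using U(3) thUN eig_bound[OF K] unfolding leading_eigenvalue_def by blast
  have lamlt: "cmod (lam (th n)) < cmod (k (th n))" for n
  proof -
    have s: "muhat mu (th n) *v vv (th n) = lam (th n) *s vv (th n)" "pdot p (vv (th n)) = 1"
      using sol thUN by (auto simp: p_def)
    then have "vv (th n) \<noteq> 0" by (auto simp: pdot_def)
    then have "is_eigenvalue (muhat mu (th n)) (lam (th n))" using s unfolding is_eigenvalue_def by blast
    then show ?thesis using U(3) thUN th[of n] unfolding leading_eigenvalue_def by auto
  qed
  define z where "z n = (k (th n), un n)" for n
  have zK: "\<forall>n. z n \<in> cball (0::complex) 1 \<times> sphere (0::complex^'s) 1" using kb un1 by (simp add: z_def)
  have "compact (cball (0::complex) 1 \<times> sphere (0::complex^'s) 1)" by (intro compact_Times compact_cball compact_sphere)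
  then obtain l0 r where l0: "l0 \<in> cball (0::complex) 1 \<times> sphere (0::complex^'s) 1" and r: "strict_mono r"
    and zr: "(z \<circ> r) \<longlonglongrightarrow> l0"
    using seq_compactE[OF compact_imp_seq_compact zK] by metis
  obtain kap uu where l0e: "l0 = (kap, uu)" by (cases l0)
  have uu1: "norm uu = 1" using l0 l0e by simp
  have kr: "(\<lambda>n. k (th (r n))) \<longlonglongrightarrow> kap" using tendsto_fst[OF zr] l0e by (simp add: z_def o_def)
  have ur: "(\<lambda>n. un (r n)) \<longlonglongrightarrow> uu" using tendsto_snd[OF zr] l0e by (simp add: z_def o_def)
  have thr: "(\<lambda>n. th (r n)) \<longlonglongrightarrow> 0" using LIMSEQ_subseq_LIMSEQ[OF th0 r] by (simp add: o_def)
  have cA: "isCont (muhat mu) 0"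
    using A_deriv[OF X, of 0] by (rule has_derivative_continuous)
  have Ar: "(\<lambda>n. muhat mu (th (r n))) \<longlonglongrightarrow> muhat mu 0" using isCont_tendsto_compose[OF cA thr] .
  have lim1: "(\<lambda>n. muhat mu (th (r n)) *v un (r n)) \<longlonglongrightarrow> muhat mu 0 *v uu"
    using bounded_bilinear.tendsto[OF bb_mv Ar ur] by simp
  have lim2: "(\<lambda>n. k (th (r n)) *s un (r n)) \<longlonglongrightarrow> kap *s uu"
    using bounded_bilinear.tendsto[OF bb_sv kr ur] by simp
  have eqA: "muhat mu 0 *v uu = kap *s uu"
    using LIMSEQ_unique[OF lim1] lim2 uneq by simp
  have lamr: "(\<lambda>n. lam (th (r n))) \<longlonglongrightarrow> 1" using isCont_tendsto_compose[OF clam thr] lam0 by simp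
  have "cmod 1 \<le> cmod kap"
  proof (rule tendsto_le[OF sequentially_bot tendsto_norm[OF kr] tendsto_norm[OF lamr]])
    show "\<forall>\<^sub>F n in sequentially. cmod (lam (th (r n))) \<le> cmod (k (th (r n)))"
      using lamlt by (simp add: less_imp_le)
  qed
  then have "1 \<le> cmod kap" by simp
  have uu0: "uu \<noteq> 0" using uu1 by auto
  have kap1: "kap = 1"
  proof (rule ccontr)
    assume "kap \<noteq> 1"
    have L0: "leading_eigenvalue (muhat mu 0) (k 0)" using U by blast
    then have k01: "k 0 = 1" using k0_eq[OF K S] by blast
    have "is_eigenvalue (muhat mu 0) kap" using eqA uu0 unfolding is_eigenvalue_def by blast
    then have "cmod kap < cmod (k 0)" using L0 \<open>kap \<noteq> 1\<close> k01 unfolding leading_eigenvalue_def by auto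
    then show False using k01 \<open>1 \<le> cmod kap\<close> by simp
  qed
  then have "muhat mu 0 *v uu = uu" using eqA by simp
  then obtain c where c: "uu = c *s ev1" using ker_P[OF K I] by blast
  have pu: "pdot p uu = c" using c pe[OF S] by (simp add: pdot_simps p_def)
  have c0: "c \<noteq> 0" using c uu0 by auto
  have pr_lim: "(\<lambda>n. pdot p (un (r n))) \<longlonglongrightarrow> c"
    using bounded_linear.tendsto[OF bl_pdot ur, of p] pu by simp
  define vn where "vn n = (1 / pdot p (un (r n))) *s un (r n)" for n
  have vlim: "vn \<longlonglongrightarrow> (1 / c) *s uu"
    unfolding vn_def by (intro bounded_bilinear.tendsto[OF bb_sv] tendsto_divide tendsto_const pr_lim ur c0)
  have ce: "(1 / c) *s uu = ev1" using c c0 by (simp add: vec_eq_iff)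
  have tlim: "(\<lambda>n. (th (r n), k (th (r n)), vn n)) \<longlonglongrightarrow> (0, 1, ev1)"
    using thr kr kap1 vlim ce by (intro tendsto_Pair) auto
  have ev1': "eventually (\<lambda>n. (th (r n), k (th (r n)), vn n) \<in> W) sequentially"
    using topological_tendstoD[OF tlim W] .
  have ev2: "eventually (\<lambda>n. pdot p (un (r n)) \<noteq> 0) sequentially"
    using tendsto_imp_eventually_ne[OF pr_lim c0] .
  obtain n where n: "(th (r n), k (th (r n)), vn n) \<in> W" "pdot p (un (r n)) \<noteq> 0"
    using eventually_happens'[OF sequentially_bot eventually_conj[OF ev1' ev2]] by blast
  have "muhat mu (th (r n)) *v vn n = k (th (r n)) *s vn n"
    unfolding vn_def mv_smult uneq by (simp add: vec_eq_iff)
  moreover have "pdot (pv pr) (vn n) = 1" using n(2) by (simp add: vn_def pdot_simps p_def)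
  ultimately have "k (th (r n)) = lam (th (r n))" using uniq n(1) by blast
  then show False using th[of "r n"] by simp
qed

lemma deriv_unique_open:
  assumes "open S" "x \<in> S" "\<And>y. y \<in> S \<Longrightarrow> f y = g y"
    and "(f has_derivative F) (at x)" "(g has_derivative F') (at x)"
  shows "F = F'"
proof -
  have "(g has_derivative F) (at x)"
    using has_derivative_transform_within_open[OF assms(4) assms(1,2)] assms(3) by blast
  then show ?thesis using assms(5) by (rule has_derivative_unique)
qed

lemma prod0_deriv:
  fixes a :: "'a::real_normed_vector \<Rightarrow> 'b::real_normed_vector" and b :: "'a \<Rightarrow> 'c::real_normed_vector" and bil :: "'b \<Rightarrow> 'c \<Rightarrow> 'e::real_normed_vector"
  assumes bb: "bounded_bilinear bil" and da: "(a has_derivative a') (at x)" and a0: "a x = 0"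
    and cb: "isCont b x"
  shows "((\<lambda>y. bil (a y) (b y)) has_derivative (\<lambda>h. bil (a' h) (b x))) (at x)"
proof -
  interpret bb: bounded_bilinear bil by fact
  have bla: "bounded_linear a'" using da by (rule has_derivative_bounded_linear)
  obtain B where B: "B > 0" "\<And>h. norm (a' h) \<le> norm h * B" using bounded_linear.pos_bounded[OF bla] by blast
  obtain Kb where Kb: "Kb > 0" "\<And>u v. norm (bil u v) \<le> norm u * norm v * Kb" using bb.pos_bounded by blast
  obtain d1 where d1: "d1 > 0" "\<And>y. norm (y - x) < d1 \<Longrightarrow> norm (a y - a x - a' (y - x)) \<le> 1 * norm (y - x)"
    using da unfolding has_derivative_at_alt by (meson zero_less_one)
  have alip: "norm (a y) \<le> (1 + B) * norm (y - x)" if "norm (y - x) < d1" for y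
  proof -
    have "norm (a y) \<le> norm (a y - a x - a' (y - x)) + norm (a' (y - x))"
      using norm_triangle_ineq[of "a y - a x - a' (y - x)" "a' (y - x)"] a0 by simp
    also have "\<dots> \<le> norm (y - x) + norm (y - x) * B" using d1(2)[OF that] B(2)[of "y - x"] by simp
    finally show ?thesis by (simp add: algebra_simps)
  qed
  have d1': "((\<lambda>y. bil (a y) (b x)) has_derivative (\<lambda>h. bil (a' h) (b x))) (at x)"
    by (rule bb.FDERIV[OF da has_derivative_const, THEN has_derivative_eq_rhs]) (simp add: bb.zero_right)
  have d2: "((\<lambda>y. bil (a y) (b y - b x)) has_derivative (\<lambda>h. 0)) (at x)"
    unfolding has_derivative_at_alt
  proof (intro conjI allI impI bounded_linear_zero)
    fix e :: real assume e: "e > 0"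
    have "e / ((1 + B) * Kb) > 0" using e B Kb by simp
    then obtain d2 where d2: "d2 > 0" "\<And>y. dist y x < d2 \<Longrightarrow> dist (b y) (b x) < e / ((1 + B) * Kb)"
      using cb unfolding continuous_at_eps_delta by blast
    show "\<exists>d>0. \<forall>y. norm (y - x) < d \<longrightarrow> norm (bil (a y) (b y - b x) - bil (a x) (b x - b x) - 0) \<le> e * norm (y - x)"
    proof (intro exI[of _ "min d1 d2"] conjI allI impI)
      show "min d1 d2 > 0" using d1 d2 by simp
      fix y assume y: "norm (y - x) < min d1 d2"
      have "norm (bil (a y) (b y - b x)) \<le> norm (a y) * norm (b y - b x) * Kb" by (rule Kb(2))
      also have "\<dots> \<le> ((1 + B) * norm (y - x)) * (e / ((1 + B) * Kb)) * Kb"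
        using alip[of y] d2(2)[of y] y Kb B by (intro mult_right_mono mult_mono) (auto simp: dist_norm)
      also have "\<dots> = e * norm (y - x)"
      proof -
        have nz: "(1 + B) * Kb \<noteq> 0" "Kb + B * Kb \<noteq> 0" using B Kb by (simp, smt (verit) mult_pos_pos)
        then show ?thesis by (simp add: field_simps)
      qed
      finally show "norm (bil (a y) (b y - b x) - bil (a x) (b x - b x) - 0) \<le> e * norm (y - x)"
        using a0 by (simp add: bb.zero_left)
    qed
  qed
  have "((\<lambda>y. bil (a y) (b x) + bil (a y) (b y - b x)) has_derivative (\<lambda>h. bil (a' h) (b x) + 0)) (at x)"
    by (rule has_derivative_add[OF d1' d2])
  then show ?thesis by (simp add: bb.diff_right)
qed

lemma real_ident:
  fixes a :: "'s::finite \<Rightarrow> real" and P :: "'s \<Rightarrow> 's \<Rightarrow> real" and Gl Gq :: "'s \<Rightarrow> real"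
    and Ll Lq M2 :: "'s \<Rightarrow> 's \<Rightarrow> real" and ml mq cl cq :: real
  assumes st: "\<And>j. (\<Sum>i\<in>UNIV. a i * P i j) = a j" and rows: "\<And>i. (\<Sum>j\<in>UNIV. P i j) = 1"
    and sa: "(\<Sum>i\<in>UNIV. a i) = 1"
    and cl: "cl = (\<Sum>i\<in>UNIV. a i * Gl i)" and cq: "cq = (\<Sum>i\<in>UNIV. a i * Gq i)"
    and apl: "\<And>i. (\<Sum>j\<in>UNIV. Ll i j) = ml + (\<Sum>j\<in>UNIV. P i j * Gl j) - Gl i"
    and apq: "\<And>i. (\<Sum>j\<in>UNIV. Lq i j) = mq + (\<Sum>j\<in>UNIV. P i j * Gq j) - Gq i"
  shows "(\<Sum>i\<in>UNIV. \<Sum>j\<in>UNIV. a i * Lq i j * (Gl j - cl)) + (\<Sum>i\<in>UNIV. \<Sum>j\<in>UNIV. a i * Ll i j * (Gq j - cq))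
      - (\<Sum>i\<in>UNIV. \<Sum>j\<in>UNIV. a i * M2 i j)
    = - (\<Sum>i\<in>UNIV. \<Sum>j\<in>UNIV. a i * (M2 i j - Ll i j * (Gq j - Gq i) - Lq i j * (Gl j - Gl i)
          + P i j * (Gl j - Gl i) * (Gq j - Gq i)))"
proof -
  define psi where "psi i = (Gl i - cl) * mq + (Gq i - cq) * ml - Gl i * Gq i + cl * Gq i + cq * Gl i" for i
  define phi where "phi j = Gl j * Gq j - cl * Gq j - cq * Gl j" for j
  have X: "(\<Sum>i\<in>UNIV. \<Sum>j\<in>UNIV. a i * Lq i j * (Gl j - cl)) + (\<Sum>i\<in>UNIV. \<Sum>j\<in>UNIV. a i * Ll i j * (Gq j - cq))
      - (\<Sum>i\<in>UNIV. \<Sum>j\<in>UNIV. a i * M2 i j)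
      + (\<Sum>i\<in>UNIV. \<Sum>j\<in>UNIV. a i * (M2 i j - Ll i j * (Gq j - Gq i) - Lq i j * (Gl j - Gl i)
          + P i j * (Gl j - Gl i) * (Gq j - Gq i)))
     = (\<Sum>i\<in>UNIV. \<Sum>j\<in>UNIV. a i * (Lq i j * (Gl i - cl) + Ll i j * (Gq i - cq)) + a i * P i j * (Gl j - Gl i) * (Gq j - Gq i))"
  proof -
    have comb: "\<And>f1 f2 f3 f4 :: 's \<Rightarrow> 's \<Rightarrow> real.
      (\<Sum>i\<in>UNIV. \<Sum>j\<in>UNIV. f1 i j) + (\<Sum>i\<in>UNIV. \<Sum>j\<in>UNIV. f2 i j) - (\<Sum>i\<in>UNIV. \<Sum>j\<in>UNIV. f3 i j)
        + (\<Sum>i\<in>UNIV. \<Sum>j\<in>UNIV. f4 i j) = (\<Sum>i\<in>UNIV. \<Sum>j\<in>UNIV. f1 i j + f2 i j - f3 i j + f4 i j)"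
      by (simp add: sum.distrib sum_subtractf)
    show ?thesis unfolding comb by (intro sum.cong refl) (simp add: algebra_simps)
  qed
  also have "\<dots> = (\<Sum>i\<in>UNIV. a i * ((Gl i - cl) * (\<Sum>j\<in>UNIV. Lq i j) + (Gq i - cq) * (\<Sum>j\<in>UNIV. Ll i j))
        + (\<Sum>j\<in>UNIV. a i * P i j * (Gl j - Gl i) * (Gq j - Gq i)))"
  proof (rule sum.cong[OF refl])
    fix i
    have "(\<Sum>j\<in>UNIV. a i * (Lq i j * (Gl i - cl) + Ll i j * (Gq i - cq)) + a i * P i j * (Gl j - Gl i) * (Gq j - Gq i))
      = (\<Sum>j\<in>UNIV. (a i * (Gl i - cl)) * Lq i j + ((a i * (Gq i - cq)) * Ll i j + a i * P i j * (Gl j - Gl i) * (Gq j - Gq i)))"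
      by (rule sum.cong) (simp_all add: algebra_simps)
    also have "\<dots> = (a i * (Gl i - cl)) * (\<Sum>j\<in>UNIV. Lq i j) + ((a i * (Gq i - cq)) * (\<Sum>j\<in>UNIV. Ll i j)
        + (\<Sum>j\<in>UNIV. a i * P i j * (Gl j - Gl i) * (Gq j - Gq i)))"
      by (simp only: sum.distrib sum_distrib_left)
    finally show "(\<Sum>j\<in>UNIV. a i * (Lq i j * (Gl i - cl) + Ll i j * (Gq i - cq)) + a i * P i j * (Gl j - Gl i) * (Gq j - Gq i))
      = a i * ((Gl i - cl) * (\<Sum>j\<in>UNIV. Lq i j) + (Gq i - cq) * (\<Sum>j\<in>UNIV. Ll i j))
        + (\<Sum>j\<in>UNIV. a i * P i j * (Gl j - Gl i) * (Gq j - Gq i))"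
      by (simp add: algebra_simps)
  qed
  also have "\<dots> = (\<Sum>i\<in>UNIV. \<Sum>j\<in>UNIV. a i * P i j * ((Gl i - cl) * (mq + Gq j - Gq i) + (Gq i - cq) * (ml + Gl j - Gl i)
        + (Gl j - Gl i) * (Gq j - Gq i)))"
  proof (rule sum.cong[OF refl])
    fix i
    have e1: "(Gl i - cl) * (\<Sum>j\<in>UNIV. Lq i j) = (\<Sum>j\<in>UNIV. P i j * ((Gl i - cl) * (mq + Gq j - Gq i)))"
    proof -
      have "(Gl i - cl) * (\<Sum>j\<in>UNIV. Lq i j) = (Gl i - cl) * ((mq - Gq i) * (\<Sum>j\<in>UNIV. P i j) + (\<Sum>j\<in>UNIV. P i j * Gq j))"
        using apq[of i] rows[of i] by simp
      also have "\<dots> = (\<Sum>j\<in>UNIV. P i j * ((Gl i - cl) * (mq + Gq j - Gq i)))"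
        by (simp add: sum_distrib_left sum_distrib_right sum.distrib[symmetric] algebra_simps)
      finally show ?thesis .
    qed
    have e2: "(Gq i - cq) * (\<Sum>j\<in>UNIV. Ll i j) = (\<Sum>j\<in>UNIV. P i j * ((Gq i - cq) * (ml + Gl j - Gl i)))"
    proof -
      have "(Gq i - cq) * (\<Sum>j\<in>UNIV. Ll i j) = (Gq i - cq) * ((ml - Gl i) * (\<Sum>j\<in>UNIV. P i j) + (\<Sum>j\<in>UNIV. P i j * Gl j))"
        using apl[of i] rows[of i] by simp
      also have "\<dots> = (\<Sum>j\<in>UNIV. P i j * ((Gq i - cq) * (ml + Gl j - Gl i)))"
        by (simp add: sum_distrib_left sum_distrib_right sum.distrib[symmetric] algebra_simps)
      finally show ?thesis .
    qed
    show "a i * ((Gl i - cl) * (\<Sum>j\<in>UNIV. Lq i j) + (Gq i - cq) * (\<Sum>j\<in>UNIV. Ll i j))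
        + (\<Sum>j\<in>UNIV. a i * P i j * (Gl j - Gl i) * (Gq j - Gq i))
      = (\<Sum>j\<in>UNIV. a i * P i j * ((Gl i - cl) * (mq + Gq j - Gq i) + (Gq i - cq) * (ml + Gl j - Gl i)
        + (Gl j - Gl i) * (Gq j - Gq i)))"
      unfolding e1 e2 by (simp add: sum_distrib_left sum.distrib[symmetric] algebra_simps)
  qed
  also have "\<dots> = (\<Sum>i\<in>UNIV. \<Sum>j\<in>UNIV. a i * P i j * psi i + a i * P i j * phi j)"
    by (intro sum.cong refl) (simp add: psi_def phi_def algebra_simps)
  also have "\<dots> = (\<Sum>i\<in>UNIV. a i * psi i) + (\<Sum>i\<in>UNIV. \<Sum>j\<in>UNIV. a i * P i j * phi j)"
  proof -
    have "\<And>i. (\<Sum>j\<in>UNIV. a i * P i j * psi i) = a i * psi i"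
      using rows by (simp add: sum_distrib_left[symmetric] sum_distrib_right[symmetric] mult.commute mult.left_commute)
    then show ?thesis by (simp add: sum.distrib)
  qed
  also have "(\<Sum>i\<in>UNIV. \<Sum>j\<in>UNIV. a i * P i j * phi j) = (\<Sum>j\<in>UNIV. a j * phi j)"
  proof -
    have "(\<Sum>i\<in>UNIV. \<Sum>j\<in>UNIV. a i * P i j * phi j) = (\<Sum>j\<in>UNIV. \<Sum>i\<in>UNIV. a i * P i j * phi j)"
      by (rule sum.swap)
    also have "\<dots> = (\<Sum>j\<in>UNIV. (\<Sum>i\<in>UNIV. a i * P i j) * phi j)" by (simp add: sum_distrib_right)
    also have "\<dots> = (\<Sum>j\<in>UNIV. a j * phi j)" using st by simp
    finally show ?thesis .
  qed
  also have "(\<Sum>i\<in>UNIV. a i * psi i) + (\<Sum>j\<in>UNIV. a j * phi j) = (\<Sum>i\<in>UNIV. a i * ((Gl i - cl) * mq + (Gq i - cq) * ml))"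
    by (simp add: sum.distrib[symmetric] psi_def phi_def algebra_simps)
  also have "\<dots> = ((\<Sum>i\<in>UNIV. a i * Gl i) - cl * (\<Sum>i\<in>UNIV. a i)) * mq + ((\<Sum>i\<in>UNIV. a i * Gq i) - cq * (\<Sum>i\<in>UNIV. a i)) * ml"
    by (simp add: sum.distrib sum_subtractf sum_distrib_left sum_distrib_right algebra_simps)
  also have "\<dots> = 0" using cl cq sa by simp
  finally show ?thesis by linarith
qed

definition M2 :: "('s::finite \<Rightarrow> 's \<Rightarrow> int ^ 'd \<Rightarrow> real) \<Rightarrow> 's \<Rightarrow> 's \<Rightarrow> 'd \<Rightarrow> 'd \<Rightarrow> real" where
  "M2 mu i j l q = infsum (\<lambda>x. mu i j x * (real_of_int (x$l) * real_of_int (x$q))) UNIV"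

lemma summ_w:
  fixes f :: "int^'d \<Rightarrow> real"
  assumes X: "exp_moments mu" and b: "\<And>x. \<bar>f x\<bar> \<le> C * norm (intvec x) ^ n"
  shows "(\<lambda>x. mu i j x * f x) summable_on UNIV"
proof (rule summable_dom)
  have "(\<lambda>x. norm (intvec x) ^ n * norm (cm mu i j x)) summable_on UNIV"
    using mom_cm[OF X, of n i j] by (simp add: mom_def)
  then show "(\<lambda>x. C * (norm (intvec x) ^ n * \<bar>mu i j x\<bar>)) summable_on UNIV"
    by (intro summable_on_cmult_right) (simp add: cm_def)
  fix x
  have "\<bar>mu i j x\<bar> * \<bar>f x\<bar> \<le> \<bar>mu i j x\<bar> * (C * norm (intvec x) ^ n)" by (rule mult_left_mono[OF b]) simp
  then show "norm (mu i j x * f x) \<le> C * (norm (intvec x) ^ n * \<bar>mu i j x\<bar>)"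
    by (simp add: abs_mult algebra_simps)
qed

lemma hs_M: "MA_kernel mu \<Longrightarrow> (mu i j has_sum Mtrans mu i j) UNIV"
  unfolding MA_kernel_def Mtrans_def by simp

lemma hs_ld:
  fixes mu :: "'s::finite \<Rightarrow> 's \<Rightarrow> int ^ 'd \<Rightarrow> real" and l q :: 'd
  assumes X: "exp_moments mu"
  shows "((\<lambda>x. mu i j x * real_of_int (x$l)) has_sum local_drift mu i j $ l) UNIV"
proof -
  have s: "(\<lambda>x. mu i j x *\<^sub>R intvec x) summable_on UNIV"
  proof (rule summable_dom)
    have "(\<lambda>x. norm (intvec x) ^ 1 * norm (cm mu i j x)) summable_on UNIV"
      using mom_cm[OF X, of 1 i j] by (simp add: mom_def)
    then show "(\<lambda>x. norm (intvec x) * \<bar>mu i j x\<bar>) summable_on UNIV" by (simp add: cm_def)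
  qed (simp add: mult.commute)
  have "((\<lambda>x. (mu i j x *\<^sub>R intvec x) $ l) has_sum local_drift mu i j $ l) UNIV"
    unfolding local_drift_def
    by (rule has_sum_bounded_linear[OF bounded_linear_vec_nth]) (use s in simp)
  then show ?thesis by simp
qed

lemma hs_M2:
  fixes mu :: "'s::finite \<Rightarrow> 's \<Rightarrow> int ^ 'd \<Rightarrow> real" and l q :: 'd
  assumes X: "exp_moments mu"
  shows "((\<lambda>x. mu i j x * (real_of_int (x$l) * real_of_int (x$q))) has_sum M2 mu i j l q) UNIV"
proof -
  have "(\<lambda>x. mu i j x * (real_of_int (x$l) * real_of_int (x$q))) summable_on UNIV"
  proof (rule summ_w[OF X, of _ 1 2])
    fix x :: "int^'d"
    have "\<bar>real_of_int (x$l)\<bar> * \<bar>real_of_int (x$q)\<bar> \<le> norm (intvec x) * norm (intvec x)"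
      by (intro mult_mono abs_intvec_nth) auto
    then show "\<bar>real_of_int (x$l) * real_of_int (x$q)\<bar> \<le> 1 * norm (intvec x) ^ 2"
      by (simp add: abs_mult power2_eq_square)
  qed
  then show ?thesis unfolding M2_def by simp
qed

lemma FT_at0: "FT c 0 = infsum c UNIV"
  by (simp add: FT_def)

lemma FT_cI0:
  fixes mu :: "'s::finite \<Rightarrow> 's \<Rightarrow> int ^ 'd \<Rightarrow> real" and l q :: 'd
  assumes X: "exp_moments mu"
  shows "FT (cI l (cm mu i j)) 0 = \<i> * complex_of_real (local_drift mu i j $ l)"
proof -
  have "((\<lambda>x. \<i> * complex_of_real (mu i j x * real_of_int (x$l))) has_sum \<i> * complex_of_real (local_drift mu i j $ l)) UNIV"
    by (intro has_sum_cmult_right has_sum_of_real hs_ld[OF X])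
  moreover have "cI l (cm mu i j) = (\<lambda>x. \<i> * complex_of_real (mu i j x * real_of_int (x$l)))"
    by (simp add: fun_eq_iff cI_def cm_def)
  ultimately show ?thesis unfolding FT_at0 by (simp add: infsumI)
qed

lemma FT_cI20:
  fixes mu :: "'s::finite \<Rightarrow> 's \<Rightarrow> int ^ 'd \<Rightarrow> real" and l q :: 'd
  assumes X: "exp_moments mu"
  shows "FT (cI q (cI l (cm mu i j))) 0 = - complex_of_real (M2 mu i j l q)"
proof -
  have "((\<lambda>x. (-1) * complex_of_real (mu i j x * (real_of_int (x$l) * real_of_int (x$q)))) has_sum (-1) * complex_of_real (M2 mu i j l q)) UNIV"
    by (intro has_sum_cmult_right has_sum_of_real hs_M2[OF X])
  moreover have "cI q (cI l (cm mu i j)) = (\<lambda>x. (-1) * complex_of_real (mu i j x * (real_of_int (x$l) * real_of_int (x$q))))"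
    by (simp add: fun_eq_iff cI_def cm_def algebra_simps)
  ultimately show ?thesis unfolding FT_at0 by (metis infsumI mult_minus1)
qed

lemma gd_comp: "global_drift mu pr $ l = (\<Sum>i\<in>UNIV. \<Sum>j\<in>UNIV. pr i * local_drift mu i j $ l)"
  by (simp add: global_drift_def)

lemma intvec_inj: "intvec z = intvec z' \<Longrightarrow> z = z'"
  by (simp add: vec_eq_iff intvec_def)

lemma sec_reindex:
  fixes F :: "real^'d \<Rightarrow> 'b::real_normed_vector"
  shows "((\<lambda>x. sec_mu mu g i j x *\<^sub>R F x) has_sum S) UNIV \<longleftrightarrow>
         ((\<lambda>z. mu i j z *\<^sub>R F (intvec z - (g j - g i))) has_sum S) UNIV"
proof -
  define h where "h z = intvec z - (g j - g i)" for z :: "int^'d"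
  have inj: "inj_on h UNIV" unfolding h_def inj_on_def using intvec_inj by auto
  have sm: "sec_mu mu g i j (h z) = mu i j z" for z
  proof -
    have e: "h z + g j - g i = intvec z" by (simp add: h_def algebra_simps)
    have "(THE z'. intvec z' = intvec z) = z" using intvec_inj by blast
    then show ?thesis unfolding sec_mu_def e by auto
  qed
  have out: "sec_mu mu g i j x = 0" if "x \<notin> range h" for x
  proof -
    have "\<not> (\<exists>z. intvec z = x + g j - g i)"
    proof
      assume "\<exists>z. intvec z = x + g j - g i"
      then obtain z where "intvec z = x + g j - g i" by blast
      then have "x = h z" by (simp add: h_def algebra_simps)
      then show False using that by auto
    qed
    then show ?thesis unfolding sec_mu_def by simp
  qed
  have "((\<lambda>x. sec_mu mu g i j x *\<^sub>R F x) has_sum S) UNIV \<longleftrightarrow> ((\<lambda>x. sec_mu mu g i j x *\<^sub>R F x) has_sum S) (range h)"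
    by (rule has_sum_cong_neutral) (auto simp: out)
  also have "\<dots> \<longleftrightarrow> (((\<lambda>x. sec_mu mu g i j x *\<^sub>R F x) \<circ> h) has_sum S) UNIV"
    by (rule has_sum_reindex[OF inj])
  also have "((\<lambda>x. sec_mu mu g i j x *\<^sub>R F x) \<circ> h) = (\<lambda>z. mu i j z *\<^sub>R F (intvec z - (g j - g i)))"
    by (simp add: o_def sm h_def[symmetric])
  finally show ?thesis .
qed

lemma sec_drift_eq:
  assumes K: "MA_kernel mu" and X: "exp_moments mu"
  shows "sec_drift mu g i j = local_drift mu i j - Mtrans mu i j *\<^sub>R (g j - g i)"
proof -
  have s: "(\<lambda>x. mu i j x *\<^sub>R intvec x) summable_on UNIV"
  proof (rule summable_dom)
    have "(\<lambda>x. norm (intvec x) ^ 1 * norm (cm mu i j x)) summable_on UNIV"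
      using mom_cm[OF X, of 1 i j] by (simp add: mom_def)
    then show "(\<lambda>x. norm (intvec x) * \<bar>mu i j x\<bar>) summable_on UNIV" by (simp add: cm_def)
  qed (simp add: mult.commute)
  have h1: "((\<lambda>x. mu i j x *\<^sub>R intvec x) has_sum local_drift mu i j) UNIV"
    using s by (simp add: local_drift_def)
  have h2: "((\<lambda>x. mu i j x *\<^sub>R (g j - g i)) has_sum Mtrans mu i j *\<^sub>R (g j - g i)) UNIV"
    by (rule has_sum_bounded_linear[OF bounded_linear_scaleR_left hs_M[OF K]])
  have "((\<lambda>z. mu i j z *\<^sub>R (intvec z - (g j - g i))) has_sum local_drift mu i j - Mtrans mu i j *\<^sub>R (g j - g i)) UNIV"
    using has_sum_diff[OF h1 h2] by (simp add: scaleR_diff_right)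
  then have "((\<lambda>x. sec_mu mu g i j x *\<^sub>R x) has_sum local_drift mu i j - Mtrans mu i j *\<^sub>R (g j - g i)) UNIV"
    using sec_reindex[of mu g i j "\<lambda>x. x"] by simp
  then show ?thesis unfolding sec_drift_def by (rule infsumI)
qed

lemma appr_comp:
  assumes K: "MA_kernel mu" and X: "exp_moments mu" and Ap: "appropriate mu pr g"
  shows "(\<Sum>j\<in>UNIV. local_drift mu i j $ q) = global_drift mu pr $ q + (\<Sum>j\<in>UNIV. Mtrans mu i j * g j $ q) - g i $ q"
proof -
  have "(\<Sum>j\<in>UNIV. sec_drift mu g i j) = global_drift mu pr" using Ap unfolding appropriate_def by blast
  then have "(\<Sum>j\<in>UNIV. sec_drift mu g i j $ q) = global_drift mu pr $ q" by (metis sum_component)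
  then have "(\<Sum>j\<in>UNIV. local_drift mu i j $ q - Mtrans mu i j * (g j $ q - g i $ q)) = global_drift mu pr $ q"
    by (simp add: sec_drift_eq[OF K X])
  moreover have "(\<Sum>j\<in>UNIV. Mtrans mu i j * (g j $ q - g i $ q)) = (\<Sum>j\<in>UNIV. Mtrans mu i j * g j $ q) - g i $ q"
    using Mtrans_rows[OF K, of i] by (simp add: algebra_simps sum_subtractf sum_distrib_right[symmetric])
  ultimately show ?thesis by (simp add: sum_subtractf)
qed

lemma energy_eq:
  fixes mu :: "'s::finite \<Rightarrow> 's \<Rightarrow> int ^ 'd \<Rightarrow> real" and l q :: 'd
  assumes K: "MA_kernel mu" and X: "exp_moments mu"
  shows "energy mu pr g l q = (\<Sum>i\<in>UNIV. \<Sum>j\<in>UNIV. pr i * (M2 mu i j l q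
      - local_drift mu i j $ l * (g j $ q - g i $ q) - local_drift mu i j $ q * (g j $ l - g i $ l)
      + Mtrans mu i j * (g j $ l - g i $ l) * (g j $ q - g i $ q)))"
proof -
  have each: "((\<lambda>x. sec_mu mu g i j x *\<^sub>R (pr i * (x $ l * x $ q))) has_sum pr i * (M2 mu i j l q
      - local_drift mu i j $ l * (g j $ q - g i $ q) - local_drift mu i j $ q * (g j $ l - g i $ l)
      + Mtrans mu i j * (g j $ l - g i $ l) * (g j $ q - g i $ q))) UNIV" for i j
  proof -
    define Dl where "Dl = g j $ l - g i $ l"
    define Dq where "Dq = g j $ q - g i $ q"
    have c: "((\<lambda>z. pr i * (mu i j z * (real_of_int (z$l) * real_of_int (z$q)) - mu i j z * real_of_int (z$l) * Dq
        - mu i j z * real_of_int (z$q) * Dl + mu i j z * (Dl * Dq))) has_sum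
        pr i * (M2 mu i j l q - local_drift mu i j $ l * Dq - local_drift mu i j $ q * Dl + Mtrans mu i j * (Dl * Dq))) UNIV"
      by (intro has_sum_cmult_right has_sum_add has_sum_diff has_sum_cmult_left hs_M2[OF X] hs_ld[OF X] hs_M[OF K])
    have "(\<lambda>z. pr i * (mu i j z * (real_of_int (z$l) * real_of_int (z$q)) - mu i j z * real_of_int (z$l) * Dq
        - mu i j z * real_of_int (z$q) * Dl + mu i j z * (Dl * Dq)))
      = (\<lambda>z. mu i j z *\<^sub>R (pr i * ((intvec z - (g j - g i)) $ l * (intvec z - (g j - g i)) $ q)))"
      by (simp add: fun_eq_iff Dl_def Dq_def algebra_simps)
    then have "((\<lambda>z. mu i j z *\<^sub>R (pr i * ((intvec z - (g j - g i)) $ l * (intvec z - (g j - g i)) $ q))) has_sum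
        pr i * (M2 mu i j l q - local_drift mu i j $ l * Dq - local_drift mu i j $ q * Dl + Mtrans mu i j * (Dl * Dq))) UNIV"
      using c by simp
    then show ?thesis
      using sec_reindex[of mu g i j "\<lambda>x. pr i * (x $ l * x $ q)"] by (simp add: Dl_def Dq_def algebra_simps)
  qed
  have tot: "((\<lambda>x. \<Sum>i\<in>UNIV. \<Sum>j\<in>UNIV. sec_mu mu g i j x *\<^sub>R (pr i * (x $ l * x $ q))) has_sum
      (\<Sum>i\<in>UNIV. \<Sum>j\<in>UNIV. pr i * (M2 mu i j l q
      - local_drift mu i j $ l * (g j $ q - g i $ q) - local_drift mu i j $ q * (g j $ l - g i $ l)
      + Mtrans mu i j * (g j $ l - g i $ l) * (g j $ q - g i $ q)))) UNIV"
    by (intro has_sum_sum_fin each) auto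
  have "(\<lambda>x::real^'d. x $ l * x $ q * (\<Sum>i\<in>UNIV. \<Sum>j\<in>UNIV. pr i * sec_mu mu g i j x))
      = (\<lambda>x. \<Sum>i\<in>UNIV. \<Sum>j\<in>UNIV. sec_mu mu g i j x *\<^sub>R (pr i * (x $ l * x $ q)))"
    by (simp add: fun_eq_iff sum_distrib_left mult_ac)
  then show ?thesis unfolding energy_def using tot by (simp add: infsumI)
qed

lemma DA0_entry: "exp_moments mu \<Longrightarrow> DA mu 0 h $ i $ j = \<i> * complex_of_real (\<Sum>q\<in>UNIV. h$q * local_drift mu i j $ q)"
  by (simp add: DA_def FT_cI0 sum_distrib_left mult_ac)

lemma DAax_entry: "exp_moments mu \<Longrightarrow> DA mu 0 (axis l 1) $ i $ j = \<i> * complex_of_real (local_drift mu i j $ l)"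
  by (simp add: DA_axis FT_cI0)

lemma D2A_entry: "exp_moments mu \<Longrightarrow> D2A mu l 0 h $ i $ j = - complex_of_real (\<Sum>q\<in>UNIV. h$q * M2 mu i j l q)"
  by (simp add: D2A_def FT_cI20 sum_negf)


definition cg :: "('s::finite \<Rightarrow> real) \<Rightarrow> ('s \<Rightarrow> real^'d) \<Rightarrow> 'd \<Rightarrow> real" where
  "cg pr g q = (\<Sum>i\<in>UNIV. pr i * g i $ q)"

definition wst :: "('s::finite \<Rightarrow> real) \<Rightarrow> ('s \<Rightarrow> real^'d) \<Rightarrow> real^'d \<Rightarrow> complex^'s" where
  "wst pr g h = (\<chi> j. - \<i> * (\<Sum>q\<in>UNIV. of_real (h$q) * of_real (g j $ q - cg pr g q)))"

lemma wst_entry: "wst pr g h $ j = - \<i> * complex_of_real (\<Sum>q\<in>UNIV. h$q * (g j $ q - cg pr g q))"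
  by (simp add: wst_def)

lemma sum_axis_real: "(\<Sum>q\<in>UNIV. axis l (1::real) $ q * F q) = F l"
proof -
  have "\<And>q. axis l 1 $ q * F q = (if q = l then F q else 0)" by (simp add: axis_def)
  then show ?thesis by simp
qed

lemma wst_axis: "wst pr g (axis l 1) $ j = - \<i> * complex_of_real (g j $ l - cg pr g l)"
  unfolding wst_entry sum_axis_real ..

lemma ii_prod: "(\<i> * complex_of_real x) * (- \<i> * complex_of_real y) = complex_of_real (x * y)"
  by (simp add: algebra_simps)

lemma pdot_mv: "pdot (pv pr) (A *v v) = (\<Sum>i\<in>UNIV. complex_of_real (pr i) * (\<Sum>j\<in>UNIV. A $ i $ j * v $ j))"
  by (simp add: pdot_def pv_def matrix_vector_mult_def)

lemma G0_comp:
  assumes "MA_kernel mu" "exp_moments mu"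
  shows "pdot (pv pr) (DA mu 0 (axis l 1) *v ev1) = \<i> * complex_of_real (global_drift mu pr $ l)"
  unfolding pdot_mv gd_comp using assms(2)
  by (simp add: DAax_entry ev1_def sum_distrib_left mult_ac)

lemma sum3_swap: "(\<Sum>i\<in>UNIV. \<Sum>j\<in>UNIV. \<Sum>q\<in>UNIV. F i j q) = (\<Sum>q\<in>UNIV. \<Sum>i\<in>UNIV. \<Sum>j\<in>UNIV. (F i j q :: real))"
proof -
  have "(\<Sum>i\<in>UNIV. \<Sum>j\<in>UNIV. \<Sum>q\<in>UNIV. F i j q) = (\<Sum>i\<in>UNIV. \<Sum>q\<in>UNIV. \<Sum>j\<in>UNIV. F i j q)"
    by (intro sum.cong refl sum.swap)
  also have "\<dots> = (\<Sum>q\<in>UNIV. \<Sum>i\<in>UNIV. \<Sum>j\<in>UNIV. F i j q)" by (rule sum.swap)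
  finally show ?thesis .
qed


lemma swap_lin: "(\<Sum>j\<in>UNIV. \<Sum>q\<in>UNIV. h q * X q j) = (\<Sum>q\<in>UNIV. h q * (\<Sum>j\<in>UNIV. (X q j :: real)))"
  by (subst sum.swap) (simp add: sum_distrib_left)

lemma vv0_char:
  fixes mu :: "'s::finite \<Rightarrow> 's \<Rightarrow> int ^ 'd \<Rightarrow> real" and w :: "complex^'s"
  assumes K: "MA_kernel mu" and X: "exp_moments mu" and S: "stationary mu pr" and I: "MA_irreducible mu"
    and Ap: "appropriate mu pr g"
    and eq: "muhat mu 0 *v w + DA mu 0 h *v ev1 - (1 *s w + L *s ev1) = 0"
    and pw: "pdot (pv pr) w = 0"
  shows "w = wst pr g h"
proof -
  define W where "W = wst pr g h"
  define wr where "wr j = (\<Sum>q\<in>UNIV. h$q * (g j $ q - cg pr g q))" for j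
  define mh where "mh = (\<Sum>q\<in>UNIV. h$q * global_drift mu pr $ q)"
  have Wj: "W $ j = - \<i> * complex_of_real (wr j)" for j by (simp add: W_def wr_def wst_entry)
  have st: "(\<forall>i. 0 \<le> pr i) \<and> (\<Sum>i\<in>UNIV. pr i) = 1 \<and> (\<forall>j. (\<Sum>i\<in>UNIV. pr i * Mtrans mu i j) = pr j)"
    using S unfolding stationary_def .
  have pr0: "(\<Sum>j\<in>UNIV. pr j * wr j) = 0"
  proof -
    have "(\<Sum>j\<in>UNIV. pr j * wr j) = (\<Sum>j\<in>UNIV. \<Sum>q\<in>UNIV. h$q * (pr j * (g j $ q - cg pr g q)))"
      by (simp add: wr_def sum_distrib_left mult_ac)
    also have "\<dots> = (\<Sum>q\<in>UNIV. h$q * (\<Sum>j\<in>UNIV. pr j * (g j $ q - cg pr g q)))" by (rule swap_lin)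
    also have "\<dots> = 0"
    proof -
      have "\<And>q. (\<Sum>j\<in>UNIV. pr j * (g j $ q - cg pr g q)) = (\<Sum>j\<in>UNIV. pr j * g j $ q) - cg pr g q * (\<Sum>j\<in>UNIV. pr j)"
        by (simp add: right_diff_distrib sum_subtractf sum_distrib_left sum_distrib_right mult.commute)
      moreover have "\<And>q. (\<Sum>j\<in>UNIV. pr j * g j $ q) = cg pr g q" by (simp add: cg_def)
      ultimately have "\<And>q. (\<Sum>j\<in>UNIV. pr j * (g j $ q - cg pr g q)) = cg pr g q - cg pr g q * (\<Sum>j\<in>UNIV. pr j)"
        by simp
      then show ?thesis using st by simp
    qed
    finally show ?thesis .
  qed
  have pW: "pdot (pv pr) W = 0"
  proof -
    have "pdot (pv pr) W = - \<i> * complex_of_real (\<Sum>j\<in>UNIV. pr j * wr j)"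
      by (simp add: pdot_def pv_def Wj sum_distrib_left mult_ac)
    then show ?thesis using pr0 by simp
  qed
  have realid: "(\<Sum>j\<in>UNIV. \<Sum>q\<in>UNIV. h$q * local_drift mu i j $ q) = mh + (\<Sum>j\<in>UNIV. Mtrans mu i j * wr j) - wr i" for i
  proof -
    have "(\<Sum>j\<in>UNIV. \<Sum>q\<in>UNIV. h$q * local_drift mu i j $ q) = (\<Sum>q\<in>UNIV. h$q * (\<Sum>j\<in>UNIV. local_drift mu i j $ q))"
      by (rule swap_lin)
    also have "\<dots> = (\<Sum>q\<in>UNIV. h$q * (global_drift mu pr $ q + (\<Sum>j\<in>UNIV. Mtrans mu i j * g j $ q) - g i $ q))"
      by (simp add: appr_comp[OF K X Ap])
    finally have A: "(\<Sum>j\<in>UNIV. \<Sum>q\<in>UNIV. h$q * local_drift mu i j $ q) =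
       (\<Sum>q\<in>UNIV. h$q * (global_drift mu pr $ q + (\<Sum>j\<in>UNIV. Mtrans mu i j * g j $ q) - g i $ q))" .
    have "(\<Sum>j\<in>UNIV. Mtrans mu i j * wr j) = (\<Sum>j\<in>UNIV. \<Sum>q\<in>UNIV. h$q * (Mtrans mu i j * (g j $ q - cg pr g q)))"
      by (simp add: wr_def sum_distrib_left mult_ac)
    also have "\<dots> = (\<Sum>q\<in>UNIV. h$q * (\<Sum>j\<in>UNIV. Mtrans mu i j * (g j $ q - cg pr g q)))" by (rule swap_lin)
    also have "\<dots> = (\<Sum>q\<in>UNIV. h$q * ((\<Sum>j\<in>UNIV. Mtrans mu i j * g j $ q) - cg pr g q))"
    proof -
      have "\<And>q. (\<Sum>j\<in>UNIV. Mtrans mu i j * (g j $ q - cg pr g q)) = (\<Sum>j\<in>UNIV. Mtrans mu i j * g j $ q) - cg pr g q * (\<Sum>j\<in>UNIV. Mtrans mu i j)"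
        by (simp add: algebra_simps sum_subtractf sum_distrib_left)
      then show ?thesis using Mtrans_rows[OF K, of i] by simp
    qed
    finally have B: "(\<Sum>j\<in>UNIV. Mtrans mu i j * wr j) = (\<Sum>q\<in>UNIV. h$q * ((\<Sum>j\<in>UNIV. Mtrans mu i j * g j $ q) - cg pr g q))" .
    have C: "mh + (\<Sum>j\<in>UNIV. Mtrans mu i j * wr j) - wr i
      = (\<Sum>q\<in>UNIV. h$q * (global_drift mu pr $ q + (\<Sum>j\<in>UNIV. Mtrans mu i j * g j $ q) - g i $ q))"
      unfolding B unfolding mh_def wr_def
      by (simp add: sum.distrib[symmetric] sum_subtractf[symmetric] algebra_simps)
    show ?thesis unfolding A C ..
  qed
  have cW: "muhat mu 0 *v W - W = (\<i> * complex_of_real mh) *s ev1 - DA mu 0 h *v ev1"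
  proof -
    have "(muhat mu 0 *v W - W) $ i = ((\<i> * complex_of_real mh) *s ev1 - DA mu 0 h *v ev1) $ i" for i
    proof -
      have "(muhat mu 0 *v W - W) $ i = - \<i> * complex_of_real ((\<Sum>j\<in>UNIV. Mtrans mu i j * wr j) - wr i)"
        by (simp add: P_mv[OF K] Wj sum_distrib_left algebra_simps)
      also have "\<dots> = \<i> * complex_of_real (mh - (\<Sum>j\<in>UNIV. \<Sum>q\<in>UNIV. h$q * local_drift mu i j $ q))"
        unfolding realid by (simp add: algebra_simps)
      also have "\<dots> = ((\<i> * complex_of_real mh) *s ev1 - DA mu 0 h *v ev1) $ i"
        using X by (simp add: matrix_vector_mult_def ev1_def DA0_entry sum_distrib_left algebra_simps)
      finally show ?thesis .
    qed
    then show ?thesis by (simp add: vec_eq_iff)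
  qed
  define d where "d = w - W"
  have cw: "muhat mu 0 *v w - w = L *s ev1 - DA mu 0 h *v ev1"
    using eq by (simp add: algebra_simps)
  have cd: "muhat mu 0 *v d - d = (L - \<i> * complex_of_real mh) *s ev1"
  proof -
    have "muhat mu 0 *v d - d = (muhat mu 0 *v w - w) - (muhat mu 0 *v W - W)"
      by (simp add: d_def matrix_vector_right_distrib algebra_simps matrix_vector_mult_diff_distrib)
    also have "\<dots> = (L - \<i> * complex_of_real mh) *s ev1" unfolding cw cW by (simp add: algebra_simps vec_eq_iff)
    finally show ?thesis .
  qed
  have "pdot (pv pr) (muhat mu 0 *v d - d) = 0" using left_P[OF K S] by (simp add: pdot_simps)
  then have "L - \<i> * complex_of_real mh = 0" using cd pe[OF S] by (simp add: pdot_simps)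
  then have "muhat mu 0 *v d = d" using cd by simp
  then obtain c where c: "d = c *s ev1" using ker_P[OF K I] by blast
  have "pdot (pv pr) d = 0" using pw pW by (simp add: d_def pdot_simps)
  then have "c = 0" using c pe[OF S] by (simp add: pdot_simps)
  then show ?thesis using c by (simp add: d_def W_def)
qed


lemma triple_lin: "(\<Sum>i\<in>UNIV. \<Sum>j\<in>UNIV. \<Sum>q\<in>UNIV. h q * F q i j) = (\<Sum>q\<in>UNIV. h q * (\<Sum>i\<in>UNIV. \<Sum>j\<in>UNIV. (F q i j :: real)))"
  by (subst sum3_swap) (simp add: sum_distrib_left)

lemma final_comp:
  fixes mu :: "'s::finite \<Rightarrow> 's \<Rightarrow> int ^ 'd \<Rightarrow> real" and l :: 'd
  assumes K: "MA_kernel mu" and X: "exp_moments mu" and S: "stationary mu pr" and Ap: "appropriate mu pr g"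
  shows "pdot (pv pr) (DA mu 0 h *v wst pr g (axis l 1)) + pdot (pv pr) (DA mu 0 (axis l 1) *v wst pr g h + D2A mu l 0 h *v ev1)
     = (\<Sum>q\<in>UNIV. - complex_of_real (energy mu pr g l q) * complex_of_real (h $ q))"
proof -
  define Ld where "Ld x i j = local_drift mu i j $ x" for x i j
  have Ta: "pdot (pv pr) (DA mu 0 h *v wst pr g (axis l 1)) =
     complex_of_real (\<Sum>i\<in>UNIV. pr i * (\<Sum>j\<in>UNIV. (\<Sum>q\<in>UNIV. h$q * Ld q i j) * (g j $ l - cg pr g l)))"
    unfolding pdot_mv DA0_entry[OF X] wst_axis ii_prod by (simp add: Ld_def)
  have Tb: "pdot (pv pr) (DA mu 0 (axis l 1) *v wst pr g h) =
     complex_of_real (\<Sum>i\<in>UNIV. pr i * (\<Sum>j\<in>UNIV. Ld l i j * (\<Sum>q\<in>UNIV. h$q * (g j $ q - cg pr g q))))"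
    unfolding pdot_mv DAax_entry[OF X] wst_entry ii_prod by (simp add: Ld_def)
  have Tc: "pdot (pv pr) (D2A mu l 0 h *v ev1) =
     complex_of_real (\<Sum>i\<in>UNIV. pr i * (\<Sum>j\<in>UNIV. - (\<Sum>q\<in>UNIV. h$q * M2 mu i j l q)))"
    unfolding pdot_mv D2A_entry[OF X] by (simp add: ev1_def)
  define Ra where "Ra q = (\<Sum>i\<in>UNIV. \<Sum>j\<in>UNIV. pr i * Ld q i j * (g j $ l - cg pr g l))" for q
  define Rb where "Rb q = (\<Sum>i\<in>UNIV. \<Sum>j\<in>UNIV. pr i * Ld l i j * (g j $ q - cg pr g q))" for q
  define Rc where "Rc q = (\<Sum>i\<in>UNIV. \<Sum>j\<in>UNIV. pr i * M2 mu i j l q)" for q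
  have ra: "(\<Sum>i\<in>UNIV. pr i * (\<Sum>j\<in>UNIV. (\<Sum>q\<in>UNIV. h$q * Ld q i j) * (g j $ l - cg pr g l))) = (\<Sum>q\<in>UNIV. h$q * Ra q)"
  proof -
    have "(\<Sum>i\<in>UNIV. pr i * (\<Sum>j\<in>UNIV. (\<Sum>q\<in>UNIV. h$q * Ld q i j) * (g j $ l - cg pr g l)))
        = (\<Sum>i\<in>UNIV. \<Sum>j\<in>UNIV. \<Sum>q\<in>UNIV. h$q * (pr i * Ld q i j * (g j $ l - cg pr g l)))"
      by (simp add: sum_distrib_left sum_distrib_right mult_ac)
    then show ?thesis by (simp add: triple_lin Ra_def)
  qed
  have rb: "(\<Sum>i\<in>UNIV. pr i * (\<Sum>j\<in>UNIV. Ld l i j * (\<Sum>q\<in>UNIV. h$q * (g j $ q - cg pr g q)))) = (\<Sum>q\<in>UNIV. h$q * Rb q)"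
  proof -
    have "(\<Sum>i\<in>UNIV. pr i * (\<Sum>j\<in>UNIV. Ld l i j * (\<Sum>q\<in>UNIV. h$q * (g j $ q - cg pr g q))))
        = (\<Sum>i\<in>UNIV. \<Sum>j\<in>UNIV. \<Sum>q\<in>UNIV. h$q * (pr i * Ld l i j * (g j $ q - cg pr g q)))"
      by (simp add: sum_distrib_left sum_distrib_right mult_ac)
    then show ?thesis by (simp add: triple_lin Rb_def)
  qed
  have rc: "(\<Sum>i\<in>UNIV. pr i * (\<Sum>j\<in>UNIV. - (\<Sum>q\<in>UNIV. h$q * M2 mu i j l q))) = (\<Sum>q\<in>UNIV. h$q * (- Rc q))"
  proof -
    have "(\<Sum>i\<in>UNIV. pr i * (\<Sum>j\<in>UNIV. - (\<Sum>q\<in>UNIV. h$q * M2 mu i j l q)))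
        = (\<Sum>i\<in>UNIV. \<Sum>j\<in>UNIV. \<Sum>q\<in>UNIV. h$q * (- (pr i * M2 mu i j l q)))"
      by (simp add: sum_distrib_left sum_negf mult_ac)
    then show ?thesis by (simp add: triple_lin Rc_def sum_negf)
  qed
  have st: "(\<forall>i. 0 \<le> pr i) \<and> (\<Sum>i\<in>UNIV. pr i) = 1 \<and> (\<forall>j. (\<Sum>i\<in>UNIV. pr i * Mtrans mu i j) = pr j)"
    using S unfolding stationary_def .
  have E: "Ra q + Rb q - Rc q = - energy mu pr g l q" for q
  proof -
    have "(\<Sum>i\<in>UNIV. \<Sum>j\<in>UNIV. pr i * Ld q i j * (g j $ l - cg pr g l)) + (\<Sum>i\<in>UNIV. \<Sum>j\<in>UNIV. pr i * Ld l i j * (g j $ q - cg pr g q))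
      - (\<Sum>i\<in>UNIV. \<Sum>j\<in>UNIV. pr i * M2 mu i j l q)
    = - (\<Sum>i\<in>UNIV. \<Sum>j\<in>UNIV. pr i * (M2 mu i j l q - Ld l i j * (g j $ q - g i $ q) - Ld q i j * (g j $ l - g i $ l)
          + Mtrans mu i j * (g j $ l - g i $ l) * (g j $ q - g i $ q)))"
    proof (rule real_ident)
      show "\<And>j. (\<Sum>i\<in>UNIV. pr i * Mtrans mu i j) = pr j" using st by blast
      show "\<And>i. (\<Sum>j\<in>UNIV. Mtrans mu i j) = 1" by (rule Mtrans_rows[OF K])
      show "(\<Sum>i\<in>UNIV. pr i) = 1" using st by blast
      show "cg pr g l = (\<Sum>i\<in>UNIV. pr i * g i $ l)" by (simp add: cg_def)
      show "cg pr g q = (\<Sum>i\<in>UNIV. pr i * g i $ q)" by (simp add: cg_def)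
      show "\<And>i. (\<Sum>j\<in>UNIV. Ld l i j) = global_drift mu pr $ l + (\<Sum>j\<in>UNIV. Mtrans mu i j * g j $ l) - g i $ l"
        unfolding Ld_def by (rule appr_comp[OF K X Ap])
      show "\<And>i. (\<Sum>j\<in>UNIV. Ld q i j) = global_drift mu pr $ q + (\<Sum>j\<in>UNIV. Mtrans mu i j * g j $ q) - g i $ q"
        unfolding Ld_def by (rule appr_comp[OF K X Ap])
    qed
    then show ?thesis unfolding Ra_def Rb_def Rc_def energy_eq[OF K X] Ld_def .
  qed
  have "pdot (pv pr) (DA mu 0 h *v wst pr g (axis l 1)) + pdot (pv pr) (DA mu 0 (axis l 1) *v wst pr g h + D2A mu l 0 h *v ev1)
      = complex_of_real ((\<Sum>q\<in>UNIV. h$q * Ra q) + (\<Sum>q\<in>UNIV. h$q * Rb q) + (\<Sum>q\<in>UNIV. h$q * (- Rc q)))"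
    unfolding pdot_simps Ta Tb Tc ra rb rc by simp
  also have "\<dots> = complex_of_real (\<Sum>q\<in>UNIV. h$q * (Ra q + Rb q - Rc q))"
    by (simp add: sum.distrib[symmetric] algebra_simps)
  also have "\<dots> = (\<Sum>q\<in>UNIV. - complex_of_real (energy mu pr g l q) * complex_of_real (h $ q))"
    unfolding E by (simp add: mult_ac)
  finally show ?thesis .
qed

theorem theorem2p9:
  fixes mu :: "'s::finite \<Rightarrow> 's \<Rightarrow> int ^ 'd \<Rightarrow> real"
    and pr :: "'s \<Rightarrow> real"
    and g :: "'s \<Rightarrow> real ^ 'd"
    and k :: "real ^ 'd \<Rightarrow> complex"
    and U :: "(real ^ 'd) set"
  assumes "MA_kernel mu" and "MA_irreducible mu" and "MA_aperiodic mu"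
    and "exp_moments mu"
    and "stationary mu pr"
    and "appropriate mu pr g"
    and "open U" and "0 \<in> U"
    and "\<forall>th\<in>U. leading_eigenvalue (muhat mu th) (k th)"
  shows "\<exists>G :: real ^ 'd \<Rightarrow> complex ^ 'd.
           (\<forall>\<^sub>F th in nhds 0.
              (k has_derivative (\<lambda>h. \<Sum>l\<in>UNIV. G th $ l * complex_of_real (h $ l))) (at th))
         \<and> G 0 = (\<chi> l. \<i> * complex_of_real (global_drift mu pr $ l))
         \<and> (G has_derivative
              (\<lambda>h. \<chi> l. \<Sum>q\<in>UNIV. - complex_of_real (energy mu pr g l q) * complex_of_real (h $ q)))
              (at 0)"
proof -
  note K = assms(1) and I = assms(2) and X = assms(4) and S = assms(5) and Ap = assms(6)
    and U = assms(7,8,9)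
  define p where "p = pv pr"
  obtain N W lam vv lam' vv' where
     N: "open N" "0 \<in> N" and W: "open W" "(0, 1, ev1) \<in> W"
     and sol: "\<And>th. th \<in> N \<Longrightarrow> muhat mu th *v vv th = lam th *s vv th \<and> pdot p (vv th) = 1 \<and> (th, lam th, vv th) \<in> W"
     and dlam: "\<And>th. th \<in> N \<Longrightarrow> (lam has_derivative lam' th) (at th)"
     and dvv: "\<And>th. th \<in> N \<Longrightarrow> (vv has_derivative vv' th) (at th)"
     and lam0: "lam 0 = 1" and vv0: "vv 0 = ev1"
     and cvv': "\<And>h. isCont (\<lambda>th. vv' th h) 0"
     and uniq: "\<And>th l v. (th, l, v) \<in> W \<Longrightarrow> muhat mu th *v v = l *s v \<Longrightarrow> pdot p v = 1 \<Longrightarrow> th \<in> N \<and> l = lam th \<and> v = vv th"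
  proof (rule eig_IFT[of "muhat mu" "DA mu" p ev1, OF A_deriv[OF X] DA_cont[OF X]])
    show "pdot p ev1 = 1" using pe[OF S] by (simp add: p_def)
    show "\<And>w. pdot p (muhat mu 0 *v w) = pdot p w" using left_P[OF K S] by (simp add: p_def)
    show "muhat mu 0 *v ev1 = ev1" by (rule ev_P[OF K])
    show "\<And>w. muhat mu 0 *v w = w \<Longrightarrow> \<exists>c. w = c *s ev1" by (rule ker_P[OF K I])
  qed (rule that; assumption)
  have clam: "isCont lam 0" using dlam[OF N(2)] by (rule has_derivative_continuous)
  obtain r where r: "r > 0" "\<And>th. norm th < r \<Longrightarrow> th \<in> U \<and> th \<in> N \<and> k th = lam th"
    using ident[OF K X S I U N W _ clam lam0, of vv] sol uniq unfolding p_def by blast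
  define G where "G th = (\<chi> l. pdot p ((muhat mu th - muhat mu 0) *v vv' th (axis l 1)) + pdot p (DA mu th (axis l 1) *v vv th))" for th
  have lamdN: "lam' th h = pdot p ((muhat mu th - muhat mu 0) *v vv' th h) + pdot p (DA mu th h *v vv th)"
    if th: "th \<in> N" for th h
  proof -
    have d1: "((\<lambda>t. pdot p (muhat mu t *v vv t)) has_derivative (\<lambda>h. pdot p (muhat mu th *v vv' th h + DA mu th h *v vv th))) (at th)"
      using bounded_linear.has_derivative[OF bl_pdot bounded_bilinear.FDERIV[OF bb_mv A_deriv[OF X] dvv[OF th]]] by simp
    have L1: "lam' th = (\<lambda>h. pdot p (muhat mu th *v vv' th h + DA mu th h *v vv th))"
    proof (rule deriv_unique_open[OF N(1) th _ dlam[OF th] d1])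
      fix y assume "y \<in> N"
      then show "lam y = pdot p (muhat mu y *v vv y)" using sol[of y] by (simp add: pdot_simps)
    qed
    have d2: "((\<lambda>t. pdot p (vv t)) has_derivative (\<lambda>h. pdot p (vv' th h))) (at th)"
      by (rule bounded_linear.has_derivative[OF bl_pdot dvv[OF th]])
    have L2: "(\<lambda>h. 0) = (\<lambda>h. pdot p (vv' th h))"
    proof (rule deriv_unique_open[OF N(1) th _ has_derivative_const d2])
      fix y assume "y \<in> N"
      then show "1 = pdot p (vv y)" using sol[of y] by simp
    qed
    have z: "pdot p (vv' th h) = 0" using fun_cong[OF L2, of h] by simp
    have "pdot p (muhat mu th *v vv' th h) = pdot p ((muhat mu th - muhat mu 0) *v vv' th h) + pdot p (muhat mu 0 *v vv' th h)"
      by (simp add: matrix_vector_mult_diff_rdistrib pdot_simps)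
    also have "pdot p (muhat mu 0 *v vv' th h) = 0" using left_P[OF K S] z by (simp add: p_def)
    finally show ?thesis using L1 by (simp add: pdot_simps)
  qed
  have lamlin: "lam' th h = (\<Sum>l\<in>UNIV. G th $ l * complex_of_real (h $ l))" if th: "th \<in> N" for th h
  proof -
    have bl: "bounded_linear (lam' th)" using dlam[OF th] by (rule has_derivative_bounded_linear)
    have "h = (\<Sum>l\<in>UNIV. (h $ l) *\<^sub>R axis l 1)" using basis_expansion[of h] by (simp add: scalar_mult_eq_scaleR)
    then have "lam' th h = lam' th (\<Sum>l\<in>UNIV. (h $ l) *\<^sub>R axis l 1)" by simp
    also have "\<dots> = (\<Sum>l\<in>UNIV. (h $ l) *\<^sub>R lam' th (axis l 1))"
      using bounded_linear.linear[OF bl] by (simp add: linear_sum linear_scale)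
    also have "\<dots> = (\<Sum>l\<in>UNIV. G th $ l * complex_of_real (h $ l))"
      by (simp add: G_def lamdN[OF th] scaleR_conv_of_real mult.commute)
    finally show ?thesis .
  qed
  have part1: "\<forall>\<^sub>F th in nhds 0. (k has_derivative (\<lambda>h. \<Sum>l\<in>UNIV. G th $ l * complex_of_real (h $ l))) (at th)"
  proof -
    have "eventually (\<lambda>th. th \<in> ball 0 r) (nhds 0)" using r(1) by (intro eventually_nhds_in_open) auto
    then show ?thesis
    proof eventually_elim
      case (elim th)
      then have thN: "th \<in> N" using r(2) by (simp add: dist_norm)
      have "(k has_derivative lam' th) (at th)"
      proof (rule has_derivative_transform_within_open[OF dlam[OF thN] open_ball elim])
        fix y :: "real^'d" assume "y \<in> ball 0 r" then show "lam y = k y" using r(2)[of y] by (simp add: dist_norm)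
      qed
      moreover have "lam' th = (\<lambda>h. \<Sum>l\<in>UNIV. G th $ l * complex_of_real (h $ l))"
        using lamlin[OF thN] by auto
      ultimately show ?case by simp
    qed
  qed
  have part2: "G 0 = (\<chi> l. \<i> * complex_of_real (global_drift mu pr $ l))"
    unfolding G_def using G0_comp[OF K X] by (simp add: vv0 p_def pdot_simps)
  have vvd0: "vv' 0 h = wst pr g h" for h
  proof -
    have d1: "((\<lambda>t. muhat mu t *v vv t - lam t *s vv t) has_derivative
       (\<lambda>h. (muhat mu 0 *v vv' 0 h + DA mu 0 h *v vv 0) - (lam 0 *s vv' 0 h + lam' 0 h *s vv 0))) (at 0)"
      by (intro has_derivative_diff bounded_bilinear.FDERIV[OF bb_mv A_deriv[OF X] dvv[OF N(2)]]
          bounded_bilinear.FDERIV[OF bb_sv dlam[OF N(2)] dvv[OF N(2)]])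
    have "(\<lambda>h. 0) = (\<lambda>h. (muhat mu 0 *v vv' 0 h + DA mu 0 h *v vv 0) - (lam 0 *s vv' 0 h + lam' 0 h *s vv 0))"
    proof (rule deriv_unique_open[OF N(1) N(2) _ has_derivative_const d1])
      fix y assume "y \<in> N" then show "0 = muhat mu y *v vv y - lam y *s vv y" using sol[of y] by simp
    qed
    then have eq: "muhat mu 0 *v vv' 0 h + DA mu 0 h *v ev1 - (1 *s vv' 0 h + lam' 0 h *s ev1) = 0"
      using fun_cong[of _ _ h] lam0 vv0 by (metis (no_types, lifting))
    have L2: "(\<lambda>h. 0) = (\<lambda>h. pdot p (vv' 0 h))"
    proof (rule deriv_unique_open[OF N(1) N(2) _ has_derivative_const bounded_linear.has_derivative[OF bl_pdot dvv[OF N(2)]]])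
      fix y assume "y \<in> N" then show "1 = pdot p (vv y)" using sol[of y] by simp
    qed
    have pw: "pdot (pv pr) (vv' 0 h) = 0" using fun_cong[OF L2, of h] by (simp add: p_def)
    show ?thesis by (rule vv0_char[OF K X S I Ap eq pw])
  qed
  have part3: "(G has_derivative
              (\<lambda>h. \<chi> l. \<Sum>q\<in>UNIV. - complex_of_real (energy mu pr g l q) * complex_of_real (h $ q))) (at 0)"
  proof (rule has_derivative_vecI)
    fix l
    have a0: "(\<lambda>th. muhat mu th - muhat mu 0) 0 = 0" by simp
    have da: "((\<lambda>th. muhat mu th - muhat mu 0) has_derivative DA mu 0) (at 0)"
      using has_derivative_diff[OF A_deriv[OF X] has_derivative_const] by simp
    have T1: "((\<lambda>th. pdot p ((muhat mu th - muhat mu 0) *v vv' th (axis l 1))) has_derivative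
        (\<lambda>h. pdot p (DA mu 0 h *v vv' 0 (axis l 1)))) (at 0)"
      using bounded_linear.has_derivative[OF bl_pdot prod0_deriv[OF bb_mv da a0 cvv'[of "axis l 1"]]] by simp
    have T2: "((\<lambda>th. pdot p (DA mu th (axis l 1) *v vv th)) has_derivative
        (\<lambda>h. pdot p (DA mu 0 (axis l 1) *v vv' 0 h + D2A mu l 0 h *v vv 0))) (at 0)"
      using bounded_linear.has_derivative[OF bl_pdot bounded_bilinear.FDERIV[OF bb_mv DA_deriv[OF X] dvv[OF N(2)]]]
      by simp
    have "((\<lambda>th. G th $ l) has_derivative
        (\<lambda>h. pdot p (DA mu 0 h *v vv' 0 (axis l 1)) + pdot p (DA mu 0 (axis l 1) *v vv' 0 h + D2A mu l 0 h *v vv 0))) (at 0)"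
      unfolding G_def vec_lambda_beta by (rule has_derivative_add[OF T1 T2])
    moreover have "(\<lambda>h. pdot p (DA mu 0 h *v vv' 0 (axis l 1)) + pdot p (DA mu 0 (axis l 1) *v vv' 0 h + D2A mu l 0 h *v vv 0))
       = (\<lambda>h. (\<chi> l. \<Sum>q\<in>UNIV. - complex_of_real (energy mu pr g l q) * complex_of_real (h $ q)) $ l)"
      using final_comp[OF K X S Ap] by (simp add: vvd0 vv0 p_def)
    ultimately show "((\<lambda>th. G th $ l) has_derivative
        (\<lambda>h. (\<chi> l. \<Sum>q\<in>UNIV. - complex_of_real (energy mu pr g l q) * complex_of_real (h $ q)) $ l)) (at 0)"
      by simp
  qed
  show ?thesis using part1 part2 part3 by blast
qed

end
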